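(* Let $C$ be a coalgebra over a field and $A=C^*$. Assume there are infinitely many isomorphism types of simple rational right (equivalently, of simple rational left) $A$-modules. Then there exist simple left $A$-modules that are not rational, and also simple right $A$-modules that are not rational.
   Context: Every right (left) $C$-comodule is a left (right) $C^*$-module via $f\rightharpoonup m=\sum m_0f(m_1)$ (resp. $m\leftharpoonup f=\sum f(m_{-1})m_0$); the left (right) $C^*$-modules arising this way are called rational. *)

theory Defs
  imports Main "HOL.Vector_Spaces"
begin

text \<open>
Tensors are represented by finite lists of pairs (finite sums of elementary tensors);
two such representatives denote the same tensor iff all products of linear functionals
agree on them (functionals separate tensors of vector spaces).  Thus the comultiplication
is delta :: 'c => ('c * 'c) list, with delta c = [(c1,c2),...] meaning Sum c1 (x) c2.
\<close>

definition lfun :: "('k::field \<Rightarrow> 'c::ab_group_add \<Rightarrow> 'c) \<Rightarrow> ('c \<Rightarrow> 'k) \<Rightarrow> bool" where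
  "lfun sc f \<longleftrightarrow> Vector_Spaces.linear sc ((*) :: 'k \<Rightarrow> 'k \<Rightarrow> 'k) f"

definition teq2 :: "('k::field \<Rightarrow> 'c::ab_group_add \<Rightarrow> 'c) \<Rightarrow> ('c \<times> 'c) list \<Rightarrow> ('c \<times> 'c) list \<Rightarrow> bool" where
  "teq2 sc xs ys \<longleftrightarrow> (\<forall>f g. lfun sc f \<and> lfun sc g \<longrightarrow>
      (\<Sum>(u,v)\<leftarrow>xs. f u * g v) = (\<Sum>(u,v)\<leftarrow>ys. f u * g v))"

definition coalgebra :: "('k::field \<Rightarrow> 'c::ab_group_add \<Rightarrow> 'c) \<Rightarrow> ('c \<Rightarrow> ('c \<times> 'c) list) \<Rightarrow> ('c \<Rightarrow> 'k) \<Rightarrow> bool" where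
  "coalgebra sc delta eps \<longleftrightarrow>
     vector_space sc \<and> lfun sc eps \<and>
     (\<forall>x y. teq2 sc (delta (x + y)) (delta x @ delta y)) \<and>
     (\<forall>a x. teq2 sc (delta (sc a x)) (map (\<lambda>(u,v). (sc a u, v)) (delta x))) \<and>
     (\<forall>x f g h. lfun sc f \<and> lfun sc g \<and> lfun sc h \<longrightarrow>
        (\<Sum>(u,v)\<leftarrow>delta x. (\<Sum>(p,q)\<leftarrow>delta u. f p * g q) * h v) =
        (\<Sum>(u,v)\<leftarrow>delta x. f u * (\<Sum>(p,q)\<leftarrow>delta v. g p * h q))) \<and>
     (\<forall>x. (\<Sum>(u,v)\<leftarrow>delta x. sc (eps u) v) = x) \<and>
     (\<forall>x. (\<Sum>(u,v)\<leftarrow>delta x. sc (eps v) u) = x)"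

definition dualC :: "('k::field \<Rightarrow> 'c::ab_group_add \<Rightarrow> 'c) \<Rightarrow> ('c \<Rightarrow> 'k) set" where
  "dualC sc = {f. lfun sc f}"

definition conv :: "('c \<Rightarrow> ('c \<times> 'c) list) \<Rightarrow> ('c \<Rightarrow> 'k::field) \<Rightarrow> ('c \<Rightarrow> 'k) \<Rightarrow> 'c \<Rightarrow> 'k" where
  "conv delta f g = (\<lambda>x. \<Sum>(u,v)\<leftarrow>delta x. f u * g v)"

text \<open>Modules over A, given by a carrier set, zero, addition and an action of A.
  For right modules, act f m denotes m acted on from the right by f.\<close>
record ('a,'m) amod =
  carr :: "'m set"
  zer  :: 'm
  pls  :: "'m \<Rightarrow> 'm \<Rightarrow> 'm"
  act  :: "'a \<Rightarrow> 'm \<Rightarrow> 'm"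

definition is_amod :: "('k::field \<Rightarrow> 'c::ab_group_add \<Rightarrow> 'c) \<Rightarrow> (('c \<Rightarrow> 'k) \<Rightarrow> ('c \<Rightarrow> 'k) \<Rightarrow> ('c \<Rightarrow> 'k))
     \<Rightarrow> ('c \<Rightarrow> 'k) \<Rightarrow> ('c \<Rightarrow> 'k, 'm) amod \<Rightarrow> bool" where
  "is_amod sc mul one M \<longleftrightarrow>
     zer M \<in> carr M \<and>
     (\<forall>x\<in>carr M. \<forall>y\<in>carr M. pls M x y \<in> carr M) \<and>
     (\<forall>x\<in>carr M. \<forall>y\<in>carr M. \<forall>z\<in>carr M. pls M (pls M x y) z = pls M x (pls M y z)) \<and>
     (\<forall>x\<in>carr M. \<forall>y\<in>carr M. pls M x y = pls M y x) \<and>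
     (\<forall>x\<in>carr M. pls M (zer M) x = x) \<and>
     (\<forall>x\<in>carr M. \<exists>y\<in>carr M. pls M x y = zer M) \<and>
     (\<forall>f\<in>dualC sc. \<forall>x\<in>carr M. act M f x \<in> carr M) \<and>
     (\<forall>f\<in>dualC sc. \<forall>x\<in>carr M. \<forall>y\<in>carr M. act M f (pls M x y) = pls M (act M f x) (act M f y)) \<and>
     (\<forall>f\<in>dualC sc. \<forall>g\<in>dualC sc. \<forall>x\<in>carr M. act M (\<lambda>c. f c + g c) x = pls M (act M f x) (act M g x)) \<and>
     (\<forall>f\<in>dualC sc. \<forall>g\<in>dualC sc. \<forall>x\<in>carr M. act M (mul f g) x = act M f (act M g x)) \<and>
     (\<forall>x\<in>carr M. act M one x = x)"

text \<open>Left A-modules: (f*g).m = f.(g.m).  Right A-modules: m.(f*g) = (m.f).g,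
  i.e. act (f*g) m = act g (act f m), a module over the opposite ring.\<close>
definition left_amod where
  "left_amod sc delta eps M \<longleftrightarrow> is_amod sc (conv delta) eps M"

definition right_amod where
  "right_amod sc delta eps M \<longleftrightarrow> is_amod sc (\<lambda>f g. conv delta g f) eps M"

definition submod :: "('k::field \<Rightarrow> 'c::ab_group_add \<Rightarrow> 'c) \<Rightarrow> ('c \<Rightarrow> 'k, 'm) amod \<Rightarrow> 'm set \<Rightarrow> bool" where
  "submod sc M N \<longleftrightarrow> N \<subseteq> carr M \<and> zer M \<in> N \<and>
     (\<forall>x\<in>N. \<forall>y\<in>N. pls M x y \<in> N) \<and> (\<forall>f\<in>dualC sc. \<forall>x\<in>N. act M f x \<in> N)"

definition simple_on :: "('k::field \<Rightarrow> 'c::ab_group_add \<Rightarrow> 'c) \<Rightarrow> ('c \<Rightarrow> 'k, 'm) amod \<Rightarrow> bool" where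
  "simple_on sc M \<longleftrightarrow> carr M \<noteq> {zer M} \<and>
     (\<forall>N. submod sc M N \<longrightarrow> N = {zer M} \<or> N = carr M)"

definition simple_left where
  "simple_left sc delta eps M \<longleftrightarrow> left_amod sc delta eps M \<and> simple_on sc M"

definition simple_right where
  "simple_right sc delta eps M \<longleftrightarrow> right_amod sc delta eps M \<and> simple_on sc M"

definition mod_iso :: "('k::field \<Rightarrow> 'c::ab_group_add \<Rightarrow> 'c) \<Rightarrow> ('c \<Rightarrow> 'k, 'm) amod \<Rightarrow> ('c \<Rightarrow> 'k, 'n) amod \<Rightarrow> bool" where
  "mod_iso sc M N \<longleftrightarrow> (\<exists>h. bij_betw h (carr M) (carr N) \<and>
     (\<forall>x\<in>carr M. \<forall>y\<in>carr M. h (pls M x y) = pls N (h x) (h y)) \<and>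
     (\<forall>f\<in>dualC sc. \<forall>x\<in>carr M. h (act M f x) = act N f (h x)))"

definition msc :: "('c \<Rightarrow> 'k::field) \<Rightarrow> ('c \<Rightarrow> 'k, 'm) amod \<Rightarrow> 'k \<Rightarrow> 'm \<Rightarrow> 'm" where
  "msc eps M a x = act M (\<lambda>c. a * eps c) x"

definition msum :: "('a, 'm) amod \<Rightarrow> 'm list \<Rightarrow> 'm" where
  "msum M xs = foldr (pls M) xs (zer M)"

definition mlin :: "('c \<Rightarrow> 'k::field) \<Rightarrow> ('c \<Rightarrow> 'k, 'm) amod \<Rightarrow> ('m \<Rightarrow> 'k) \<Rightarrow> bool" where
  "mlin eps M phi \<longleftrightarrow> (\<forall>x\<in>carr M. \<forall>y\<in>carr M. phi (pls M x y) = phi x + phi y) \<and>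
     (\<forall>a. \<forall>x\<in>carr M. phi (msc eps M a x) = a * phi x)"

definition right_comod :: "('k::field \<Rightarrow> 'c::ab_group_add \<Rightarrow> 'c) \<Rightarrow> ('c \<Rightarrow> ('c \<times> 'c) list) \<Rightarrow> ('c \<Rightarrow> 'k)
     \<Rightarrow> ('c \<Rightarrow> 'k, 'm) amod \<Rightarrow> ('m \<Rightarrow> ('m \<times> 'c) list) \<Rightarrow> bool" where
  "right_comod sc delta eps M rho \<longleftrightarrow>
     (\<forall>x\<in>carr M. \<forall>(u,c)\<in>set (rho x). u \<in> carr M) \<and>
     (\<forall>x\<in>carr M. \<forall>y\<in>carr M. \<forall>phi f. mlin eps M phi \<and> lfun sc f \<longrightarrow>
        (\<Sum>(u,c)\<leftarrow>rho (pls M x y). phi u * f c) =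
        (\<Sum>(u,c)\<leftarrow>rho x @ rho y. phi u * f c)) \<and>
     (\<forall>a. \<forall>x\<in>carr M. \<forall>phi f. mlin eps M phi \<and> lfun sc f \<longrightarrow>
        (\<Sum>(u,c)\<leftarrow>rho (msc eps M a x). phi u * f c) =
        (\<Sum>(u,c)\<leftarrow>rho x. phi u * f (sc a c))) \<and>
     (\<forall>x\<in>carr M. \<forall>phi f g. mlin eps M phi \<and> lfun sc f \<and> lfun sc g \<longrightarrow>
        (\<Sum>(u,c)\<leftarrow>rho x. (\<Sum>(p,d)\<leftarrow>rho u. phi p * f d) * g c) =
        (\<Sum>(u,c)\<leftarrow>rho x. phi u * (\<Sum>(p,q)\<leftarrow>delta c. f p * g q))) \<and>
     (\<forall>x\<in>carr M. msum M (map (\<lambda>(u,c). msc eps M (eps c) u) (rho x)) = x)"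

definition left_comod :: "('k::field \<Rightarrow> 'c::ab_group_add \<Rightarrow> 'c) \<Rightarrow> ('c \<Rightarrow> ('c \<times> 'c) list) \<Rightarrow> ('c \<Rightarrow> 'k)
     \<Rightarrow> ('c \<Rightarrow> 'k, 'm) amod \<Rightarrow> ('m \<Rightarrow> ('c \<times> 'm) list) \<Rightarrow> bool" where
  "left_comod sc delta eps M lam \<longleftrightarrow>
     (\<forall>x\<in>carr M. \<forall>(c,u)\<in>set (lam x). u \<in> carr M) \<and>
     (\<forall>x\<in>carr M. \<forall>y\<in>carr M. \<forall>phi f. mlin eps M phi \<and> lfun sc f \<longrightarrow>
        (\<Sum>(c,u)\<leftarrow>lam (pls M x y). f c * phi u) =
        (\<Sum>(c,u)\<leftarrow>lam x @ lam y. f c * phi u)) \<and>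
     (\<forall>a. \<forall>x\<in>carr M. \<forall>phi f. mlin eps M phi \<and> lfun sc f \<longrightarrow>
        (\<Sum>(c,u)\<leftarrow>lam (msc eps M a x). f c * phi u) =
        (\<Sum>(c,u)\<leftarrow>lam x. f (sc a c) * phi u)) \<and>
     (\<forall>x\<in>carr M. \<forall>phi f g. mlin eps M phi \<and> lfun sc f \<and> lfun sc g \<longrightarrow>
        (\<Sum>(c,u)\<leftarrow>lam x. (\<Sum>(p,q)\<leftarrow>delta c. f p * g q) * phi u) =
        (\<Sum>(c,u)\<leftarrow>lam x. f c * (\<Sum>(d,p)\<leftarrow>lam u. g d * phi p))) \<and>
     (\<forall>x\<in>carr M. msum M (map (\<lambda>(c,u). msc eps M (eps c) u) (lam x)) = x)"

definition rational_left where
  "rational_left sc delta eps M \<longleftrightarrow> (\<exists>rho. right_comod sc delta eps M rho \<and>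
     (\<forall>f\<in>dualC sc. \<forall>x\<in>carr M. act M f x = msum M (map (\<lambda>(u,c). msc eps M (f c) u) (rho x))))"

definition rational_right where
  "rational_right sc delta eps M \<longleftrightarrow> (\<exists>lam. left_comod sc delta eps M lam \<and>
     (\<forall>f\<in>dualC sc. \<forall>x\<in>carr M. act M f x = msum M (map (\<lambda>(c,u). msc eps M (f c) u) (lam x))))"

end

theory Submission imports Defs "HOL-Library.Function_Algebras" begin

lemma vs_field: "vector_space ((*) :: 'k::field \<Rightarrow> 'k \<Rightarrow> 'k)"
  by unfold_locales (auto simp: algebra_simps)

lemma sum_list_map_add: "(\<Sum>x\<leftarrow>L. p x + q x) = (\<Sum>x\<leftarrow>L. p x) + (\<Sum>x\<leftarrow>L. (q x :: 'a::ab_group_add))"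
  by (induct L) (auto simp: algebra_simps)

lemma sum_list_map_mult: "(\<Sum>x\<leftarrow>L. a * p x) = a * (\<Sum>x\<leftarrow>L. (p x :: 'a::comm_ring))"
  by (induct L) (auto simp: algebra_simps)

locale coal =
  fixes sc :: "'k::field \<Rightarrow> 'c::ab_group_add \<Rightarrow> 'c"
    and delta :: "'c \<Rightarrow> ('c \<times> 'c) list"
    and eps :: "'c \<Rightarrow> 'k"
  assumes coal: "coalgebra sc delta eps"
begin

lemma vs: "vector_space sc" using coal unfolding coalgebra_def by auto

sublocale VS: vector_space sc by (rule vs)

lemma lfun_iff: "lfun sc f \<longleftrightarrow> (\<forall>x y. f (x + y) = f x + f y) \<and> (\<forall>a x. f (sc a x) = a * f x)"
  unfolding lfun_def linear_iff using vs vs_field by auto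

lemma lfunD: assumes "lfun sc f" shows "f (x + y) = f x + f y" "f (sc a x) = a * f x"
  using assms by (auto simp: lfun_iff)

lemma lfun_zero: "lfun sc f \<Longrightarrow> f 0 = 0"
  by (metis add_cancel_left_right lfunD(1))

lemma lfun_diff: "lfun sc f \<Longrightarrow> f (x - y) = f x - f y"
  by (metis add_diff_cancel diff_add_cancel lfunD(1))

lemma lfun_sum_list: "lfun sc f \<Longrightarrow> f (\<Sum>x\<leftarrow>L. g x) = (\<Sum>x\<leftarrow>L. f (g x))"
  by (induct L) (auto simp: lfunD lfun_zero)

lemma lfun_eps: "lfun sc eps" using coal unfolding coalgebra_def by auto

lemma lfun_I: "(\<And>x y. f (x + y) = f x + f y) \<Longrightarrow> (\<And>a x. f (sc a x) = a * f x) \<Longrightarrow> lfun sc f"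
  by (auto simp: lfun_iff)

lemma lfun_add: "lfun sc f \<Longrightarrow> lfun sc g \<Longrightarrow> lfun sc (\<lambda>c. f c + g c)"
  by (auto simp: lfun_iff algebra_simps)
lemma lfun_diff_fun: "lfun sc f \<Longrightarrow> lfun sc g \<Longrightarrow> lfun sc (\<lambda>c. f c - g c)"
  by (auto simp: lfun_iff algebra_simps)
lemma lfun_scal: "lfun sc f \<Longrightarrow> lfun sc (\<lambda>c. a * f c)"
  by (auto simp: lfun_iff algebra_simps)
lemma lfun_0: "lfun sc (\<lambda>c. 0)"
  by (auto simp: lfun_iff algebra_simps)

lemma sep: assumes "\<And>h. lfun sc h \<Longrightarrow> h x = h y" shows "x = y"
proof (rule ccontr)
  assume "x \<noteq> y"
  hence v: "x - y \<noteq> 0" by simp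
  interpret P: vector_space_pair sc "(*) :: 'k \<Rightarrow> 'k \<Rightarrow> 'k"
    using vs vs_field by (simp add: vector_space_pair_def)
  have "VS.independent {x - y}" using v by simp
  from P.linear_independent_extend[OF this, of "\<lambda>_. 1"]
  obtain g where g: "Vector_Spaces.linear sc (*) g" "g (x - y) = 1" by blast
  hence l: "lfun sc g" unfolding lfun_def by simp
  have "g x - g y = 1" using g l by (simp add: lfun_diff)
  with assms[OF l] show False by simp
qed

lemma A_I: "lfun sc f \<Longrightarrow> f \<in> dualC sc" by (simp add: dualC_def)
lemma A_D: "f \<in> dualC sc \<Longrightarrow> lfun sc f" by (simp add: dualC_def)

lemma teq2D: "teq2 sc xs ys \<Longrightarrow> lfun sc f \<Longrightarrow> lfun sc g \<Longrightarrow>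
  (\<Sum>(u,v)\<leftarrow>xs. f u * g v) = (\<Sum>(u,v)\<leftarrow>ys. f u * g v)"
  unfolding teq2_def by blast

lemma delta_add: "teq2 sc (delta (x + y)) (delta x @ delta y)"
  using coal unfolding coalgebra_def by blast
lemma delta_scal: "teq2 sc (delta (sc a x)) (map (\<lambda>(u,v). (sc a u, v)) (delta x))"
  using coal unfolding coalgebra_def by blast
lemma coassoc: "lfun sc f \<Longrightarrow> lfun sc g \<Longrightarrow> lfun sc h \<Longrightarrow>
        (\<Sum>(u,v)\<leftarrow>delta x. (\<Sum>(p,q)\<leftarrow>delta u. f p * g q) * h v) =
        (\<Sum>(u,v)\<leftarrow>delta x. f u * (\<Sum>(p,q)\<leftarrow>delta v. g p * h q))"
  using coal unfolding coalgebra_def by blast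
lemma counit1: "(\<Sum>(u,v)\<leftarrow>delta x. sc (eps u) v) = x"
  using coal unfolding coalgebra_def by blast
lemma counit2: "(\<Sum>(u,v)\<leftarrow>delta x. sc (eps v) u) = x"
  using coal unfolding coalgebra_def by blast

lemma conv_apply: "conv delta f g x = (\<Sum>(u,v)\<leftarrow>delta x. f u * g v)"
  by (simp add: conv_def)

lemma scal_sum_aux: "lfun sc f \<Longrightarrow> sum_list (map ((\<lambda>(u, v). f u * g v) \<circ> (\<lambda>(u, y). (sc a u, y))) L) =
   (\<Sum>(u,v)\<leftarrow>L. a * (f u * g v))"
  by (induct L) (auto simp: lfunD algebra_simps)

lemma conv_lfun: assumes f: "lfun sc f" and g: "lfun sc g" shows "lfun sc (conv delta f g)"
proof (rule lfun_I)
  fix x y show "conv delta f g (x + y) = conv delta f g x + conv delta f g y"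
    using teq2D[OF delta_add f g] by (simp add: conv_apply)
next
  fix a x
  have "conv delta f g (sc a x) = (\<Sum>(u,v)\<leftarrow>map (\<lambda>(u,v). (sc a u, v)) (delta x). f u * g v)"
    using teq2D[OF delta_scal f g] by (simp add: conv_apply)
  also have "\<dots> = (\<Sum>(u,v)\<leftarrow>delta x. a * (f u * g v))"
    using f by (simp add: scal_sum_aux)
  also have "\<dots> = a * conv delta f g x"
    unfolding conv_apply by (simp add: case_prod_unfold sum_list_map_mult)
  finally show "conv delta f g (sc a x) = a * conv delta f g x" .
qed

lemma conv_A: "f \<in> dualC sc \<Longrightarrow> g \<in> dualC sc \<Longrightarrow> conv delta f g \<in> dualC sc"
  by (simp add: dualC_def conv_lfun)

lemma conv_assoc: "lfun sc f \<Longrightarrow> lfun sc g \<Longrightarrow> lfun sc h \<Longrightarrow>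
  conv delta (conv delta f g) h = conv delta f (conv delta g h)"
  unfolding conv_def by (rule ext) (simp add: coassoc[unfolded case_prod_unfold] case_prod_unfold)

lemma conv_eps_left: assumes f: "lfun sc f" shows "conv delta eps f = f"
proof
  fix x
  have "f x = f (\<Sum>(u,v)\<leftarrow>delta x. sc (eps u) v)" by (simp add: counit1)
  also have "\<dots> = (\<Sum>(u,v)\<leftarrow>delta x. eps u * f v)"
    by (simp add: lfun_sum_list[OF f] case_prod_unfold lfunD[OF f])
  finally show "conv delta eps f x = f x" by (simp add: conv_apply)
qed

lemma conv_eps_right: assumes f: "lfun sc f" shows "conv delta f eps = f"
proof
  fix x
  have "f x = f (\<Sum>(u,v)\<leftarrow>delta x. sc (eps v) u)" by (simp add: counit2)
  also have "\<dots> = (\<Sum>(u,v)\<leftarrow>delta x. f u * eps v)"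
    by (simp add: lfun_sum_list[OF f] case_prod_unfold lfunD[OF f] mult.commute)
  finally show "conv delta f eps x = f x" by (simp add: conv_apply)
qed

lemma conv_add_left: "conv delta (\<lambda>c. f c + g c) h = (\<lambda>x. conv delta f h x + conv delta g h x)"
  unfolding conv_def by (rule ext) (simp add: case_prod_unfold distrib_right sum_list_map_add)
lemma conv_add_right: "conv delta h (\<lambda>c. f c + g c) = (\<lambda>x. conv delta h f x + conv delta h g x)"
  unfolding conv_def by (rule ext) (simp add: case_prod_unfold distrib_left sum_list_map_add)
lemma conv_scal_left: "conv delta (\<lambda>c. a * f c) h = (\<lambda>x. a * conv delta f h x)"
  unfolding conv_def by (rule ext) (simp add: case_prod_unfold sum_list_map_mult[symmetric] mult.assoc)
lemma conv_scal_right: "conv delta h (\<lambda>c. a * f c) = (\<lambda>x. a * conv delta h f x)"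
  unfolding conv_def by (rule ext) (simp add: case_prod_unfold sum_list_map_mult[symmetric] algebra_simps)
lemma conv_diff_left: "conv delta (\<lambda>c. f c - g c) h = (\<lambda>x. conv delta f h x - conv delta g h x)"
  unfolding conv_def by (rule ext) (simp add: case_prod_unfold left_diff_distrib sum_list_subtractf)
lemma conv_diff_right: "conv delta h (\<lambda>c. f c - g c) = (\<lambda>x. conv delta h f x - conv delta h g x)"
  unfolding conv_def by (rule ext) (simp add: case_prod_unfold right_diff_distrib sum_list_subtractf)
lemma conv_zero_left: "conv delta (\<lambda>c. 0) h = (\<lambda>x. 0)"
  unfolding conv_def by (rule ext) (simp add: case_prod_unfold)
lemma conv_zero_right: "conv delta h (\<lambda>c. 0) = (\<lambda>x. 0)"
  unfolding conv_def by (rule ext) (simp add: case_prod_unfold)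

lemma conv_epsscal_left: "lfun sc f \<Longrightarrow> conv delta (\<lambda>c. a * eps c) f = (\<lambda>c. a * f c)"
  by (simp add: conv_scal_left conv_eps_left)
lemma conv_epsscal_right: "lfun sc f \<Longrightarrow> conv delta f (\<lambda>c. a * eps c) = (\<lambda>c. a * f c)"
  by (simp add: conv_scal_right conv_eps_right)

end

context vector_space begin

lemma ext_functional:
  assumes K: "subspace K" and B: "independent B" and BK: "span B \<inter> K \<subseteq> {0}"
  shows "\<exists>j. Vector_Spaces.linear scale ((*) :: 'a \<Rightarrow> 'a \<Rightarrow> 'a) j \<and> (\<forall>x\<in>K. j x = 0) \<and> (\<forall>b\<in>B. j b = f b)"
proof -
  obtain BK where BK1: "BK \<subseteq> K" "independent BK" "K \<subseteq> span BK" "card BK = dim K"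
    by (rule basis_exists)
  obtain BB where BB: "BK \<subseteq> BB" "BB \<subseteq> BK \<union> B" "independent BB" "BK \<union> B \<subseteq> span BB"
    by (rule maximal_independent_subset_extend[of BK "BK \<union> B"]) (use BK1 in auto)
  have spBK: "span BK \<subseteq> K" using BK1 K span_minimal by blast
  have BinBB: "B \<subseteq> BB"
  proof
    fix b assume b: "b \<in> B"
    show "b \<in> BB"
    proof (rule ccontr)
      assume nb: "b \<notin> BB"
      have "b \<in> span BB" using BB b by blast
      moreover have "BB = BK \<union> (BB - BK)" using BB by blast
      ultimately have "b \<in> span (BK \<union> (BB - BK))" by simp
      then obtain k r where kr: "b = k + r" "k \<in> span BK" "r \<in> span (BB - BK)"
        unfolding span_Un by auto
      have "BB - BK \<subseteq> B - {b}" using BB nb by blast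
      hence r: "r \<in> span (B - {b})" using kr span_mono by blast
      hence "r \<in> span B" using span_mono[of "B - {b}" B] by blast
      moreover have "b \<in> span B" using b span_base by blast
      ultimately have "b - r \<in> span B" by (simp add: span_diff)
      hence "k \<in> span B" using kr by simp
      moreover have "k \<in> K" using kr spBK by blast
      ultimately have "k = 0" using BK by blast
      hence "b \<in> span (B - {b})" using kr r by simp
      hence "dependent B" using b dependent_def by blast
      thus False using B by simp
    qed
  qed
  have BKB: "b \<in> B \<Longrightarrow> b \<notin> BK" for b
  proof
    assume "b \<in> B" "b \<in> BK"
    hence "b \<in> span B \<inter> K" using BK1 span_base by blast
    hence "b = 0" using BK by blast
    with \<open>b \<in> B\<close> B show False using dependent_zero by blast
  qed
  interpret P: vector_space_pair scale "(*) :: 'a \<Rightarrow> 'a \<Rightarrow> 'a"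
    using vector_space_axioms vs_field by (simp add: vector_space_pair_def)
  define g where "g x = (if x \<in> BK then 0 else f x)" for x
  define j where "j = P.construct BB g"
  have lj: "Vector_Spaces.linear scale (*) j" unfolding j_def using BB by (simp add: P.linear_construct)
  have l0: "Vector_Spaces.linear scale ((*) :: 'a \<Rightarrow> 'a \<Rightarrow> 'a) (\<lambda>x. 0)"
    using vector_space_axioms vs_field by (simp add: linear_iff)
  have jBB: "x \<in> BB \<Longrightarrow> j x = g x" for x unfolding j_def using BB by (simp add: P.construct_basis)
  have "\<forall>x\<in>K. j x = 0"
  proof
    fix x assume "x \<in> K"
    hence "x \<in> span BK" using BK1 by blast
    moreover have "\<And>b. b \<in> BK \<Longrightarrow> j b = 0" using jBB BB(1) g_def by auto
    ultimately show "j x = 0" using P.linear_eq_on[OF lj l0, of x BK] by blast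
  qed
  moreover have "\<forall>b\<in>B. j b = f b" using BinBB jBB g_def BKB by auto
  ultimately show ?thesis using lj by blast
qed

lemma dim_eq_subspace:
  assumes X: "subspace X" and Y: "subspace Y" and XY: "X \<subseteq> Y" and P: "Y \<subseteq> span P" "finite P"
    and d: "dim Y \<le> dim X"
  shows "X = Y"
proof (rule ccontr)
  assume "X \<noteq> Y"
  then obtain y where y: "y \<in> Y" "y \<notin> X" using XY by blast
  obtain BX where BX: "BX \<subseteq> X" "independent BX" "X \<subseteq> span BX" "card BX = dim X"
    by (rule basis_exists)
  obtain BY where BY: "BY \<subseteq> Y" "independent BY" "Y \<subseteq> span BY" "card BY = dim Y"
    by (rule basis_exists)
  have "span BX \<subseteq> X" using BX X span_minimal by blast
  hence ny: "y \<notin> span BX" using y by blast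
  have ind: "independent (insert y BX)" using independent_insertI[OF ny BX(2)] .
  have fBY: "finite BY" using independent_span_bound[OF P(2) BY(2)] BY(1) P(1) by blast
  have "insert y BX \<subseteq> span BY" using BX BY y XY by blast
  from independent_span_bound[OF fBY ind this]
  have "finite (insert y BX)" "card (insert y BX) \<le> card BY" by auto
  moreover have "y \<notin> BX" using ny span_base by blast
  ultimately have "card BX + 1 \<le> card BY" by simp
  thus False using BX BY d by simp
qed

end

context coal begin

definition ra where "ra c f = (\<Sum>(u,v)\<leftarrow>delta c. sc (f u) v)"
definition la where "la f c = (\<Sum>(u,v)\<leftarrow>delta c. sc (f v) u)"

lemma h_ra: "lfun sc h \<Longrightarrow> h (ra c f) = conv delta f h c"
  unfolding ra_def conv_apply by (simp add: lfun_sum_list case_prod_unfold lfunD)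

lemma h_la: "lfun sc h \<Longrightarrow> h (la f c) = conv delta h f c"
  unfolding la_def conv_apply by (simp add: lfun_sum_list case_prod_unfold lfunD mult.commute)

lemma ra_add: "lfun sc f \<Longrightarrow> ra (x + y) f = ra x f + ra y f"
  by (rule sep) (simp add: h_ra lfunD conv_lfun)
lemma ra_scale: "lfun sc f \<Longrightarrow> ra (sc a x) f = sc a (ra x f)"
  by (rule sep) (simp add: h_ra lfunD conv_lfun)
lemma la_add: "lfun sc f \<Longrightarrow> la f (x + y) = la f x + la f y"
  by (rule sep) (simp add: h_la lfunD conv_lfun)
lemma la_scale: "lfun sc f \<Longrightarrow> la f (sc a x) = sc a (la f x)"
  by (rule sep) (simp add: h_la lfunD conv_lfun)

lemma ra_lin: "lfun sc f \<Longrightarrow> Vector_Spaces.linear sc sc (\<lambda>c. ra c f)"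
  using vs by (simp add: linear_iff ra_add ra_scale)
lemma la_lin: "lfun sc f \<Longrightarrow> Vector_Spaces.linear sc sc (la f)"
  using vs by (simp add: linear_iff la_add la_scale)

lemma ra_zero: "lfun sc f \<Longrightarrow> ra 0 f = 0"
  by (metis add_cancel_right_right ra_add)
lemma ra_diff: "lfun sc f \<Longrightarrow> ra (x - y) f = ra x f - ra y f"
  by (metis add_diff_cancel diff_add_cancel ra_add)

lemma ra_eps: "ra c eps = c" unfolding ra_def by (rule counit1)
lemma la_eps: "la eps c = c" unfolding la_def by (rule counit2)

lemma ra_ra: "lfun sc f \<Longrightarrow> lfun sc g \<Longrightarrow> ra (ra c f) g = ra c (conv delta f g)"
  by (rule sep) (simp add: h_ra conv_lfun conv_assoc)
lemma la_la: "lfun sc f \<Longrightarrow> lfun sc g \<Longrightarrow> la f (la g c) = la (conv delta f g) c"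
  by (rule sep) (simp add: h_la conv_lfun conv_assoc)

lemma ra_escal: "ra c (\<lambda>x. a * eps x) = sc a c"
  by (rule sep) (simp add: h_ra conv_epsscal_left lfunD)

lemma ra_fadd: "ra c (\<lambda>x. f x + g x) = ra c f + ra c g"
  unfolding ra_def by (simp add: case_prod_unfold VS.scale_left_distrib sum_list_map_add)
lemma ra_f0: "ra c (\<lambda>x. 0) = 0"
  unfolding ra_def by (simp add: case_prod_unfold)

lemma conv_as_ra: "lfun sc f \<Longrightarrow> conv delta g f w = f (ra w g)"
  by (simp add: h_ra)
lemma conv_as_la: "lfun sc f \<Longrightarrow> conv delta f g w = f (la g w)"
  by (simp add: h_la)

lemma sum_in_span: "(\<Sum>(u,v)\<leftarrow>L. sc (f u) v) \<in> VS.span (snd ` set L)"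
proof (induct L)
  case Nil thus ?case by (simp add: VS.span_zero)
next
  case (Cons p L)
  have "snd p \<in> VS.span (snd ` set (p # L))" by (intro VS.span_base) auto
  moreover have "VS.span (snd ` set L) \<subseteq> VS.span (snd ` set (p # L))" by (intro VS.span_mono) auto
  ultimately show ?case using Cons by (auto simp: case_prod_unfold intro!: VS.span_add VS.span_scale)
qed

lemma ra_in_span: "ra c f \<in> VS.span (snd ` set (delta c))"
  unfolding ra_def by (rule sum_in_span)

end

locale rmod = coal sc delta eps for sc :: "'k::field \<Rightarrow> 'c::ab_group_add \<Rightarrow> 'c" and delta eps +
  fixes M :: "('c \<Rightarrow> 'k, 'm) amod"
  assumes rm: "right_amod sc delta eps M"
begin

abbreviation "Cr \<equiv> carr M"
abbreviation "pl \<equiv> pls M"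
abbreviation "z \<equiv> zer M"

lemma ax: "is_amod sc (\<lambda>f g. conv delta g f) eps M" using rm by (simp add: right_amod_def)

lemma z_in: "z \<in> Cr" using ax unfolding is_amod_def by blast
lemma pl_closed: "x \<in> Cr \<Longrightarrow> y \<in> Cr \<Longrightarrow> pl x y \<in> Cr" using ax unfolding is_amod_def by auto
lemma pl_assoc: "x \<in> Cr \<Longrightarrow> y \<in> Cr \<Longrightarrow> w \<in> Cr \<Longrightarrow> pl (pl x y) w = pl x (pl y w)"
  using ax unfolding is_amod_def by blast
lemma pl_comm: "x \<in> Cr \<Longrightarrow> y \<in> Cr \<Longrightarrow> pl x y = pl y x" using ax unfolding is_amod_def by blast
lemma pl_zl: "x \<in> Cr \<Longrightarrow> pl z x = x" using ax unfolding is_amod_def by blast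
lemma pl_zr: "x \<in> Cr \<Longrightarrow> pl x z = x" using pl_zl pl_comm z_in by metis
lemma neg_ex: "x \<in> Cr \<Longrightarrow> \<exists>y\<in>Cr. pl x y = z" using ax unfolding is_amod_def by blast
lemma act_closed: "f \<in> dualC sc \<Longrightarrow> x \<in> Cr \<Longrightarrow> act M f x \<in> Cr" using ax unfolding is_amod_def by blast
lemma act_pl: "f \<in> dualC sc \<Longrightarrow> x \<in> Cr \<Longrightarrow> y \<in> Cr \<Longrightarrow> act M f (pl x y) = pl (act M f x) (act M f y)"
  using ax unfolding is_amod_def by blast
lemma act_fadd: "f \<in> dualC sc \<Longrightarrow> g \<in> dualC sc \<Longrightarrow> x \<in> Cr \<Longrightarrow> act M (\<lambda>c. f c + g c) x = pl (act M f x) (act M g x)"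
  using ax unfolding is_amod_def by blast
lemma act_mul: "f \<in> dualC sc \<Longrightarrow> g \<in> dualC sc \<Longrightarrow> x \<in> Cr \<Longrightarrow> act M (conv delta g f) x = act M f (act M g x)"
  using ax unfolding is_amod_def by blast
lemma act_eps: "x \<in> Cr \<Longrightarrow> act M eps x = x" using ax unfolding is_amod_def by blast

lemma cancel: assumes "a \<in> Cr" "b \<in> Cr" "c \<in> Cr" "pl a b = pl c b" shows "a = c"
proof -
  obtain nb where nb: "nb \<in> Cr" "pl b nb = z" using neg_ex assms by blast
  have "a = pl a (pl b nb)" using nb assms pl_zr by simp
  also have "\<dots> = pl (pl c b) nb" using pl_assoc assms nb by metis
  also have "\<dots> = c" using pl_assoc assms nb pl_zr by metis
  finally show ?thesis .
qed

lemma idem_z: "a \<in> Cr \<Longrightarrow> pl a a = a \<Longrightarrow> a = z"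
  using cancel[of a a z] pl_zl z_in by metis

lemma A0: "(\<lambda>c. 0) \<in> dualC sc" by (simp add: A_I lfun_0)
lemma Aeps: "eps \<in> dualC sc" by (simp add: A_I lfun_eps)
lemma Aesc: "(\<lambda>c. a * eps c) \<in> dualC sc" by (simp add: A_I lfun_eps lfun_scal)

lemma act_0: "x \<in> Cr \<Longrightarrow> act M (\<lambda>c. 0) x = z"
  using act_fadd[OF A0 A0, of x] by (intro idem_z) (simp_all add: act_closed A0)

lemma act_z: "f \<in> dualC sc \<Longrightarrow> act M f z = z"
  using act_pl[of f z z] z_in pl_zl by (intro idem_z) (simp_all add: act_closed)

lemma msc_closed: "x \<in> Cr \<Longrightarrow> msc eps M a x \<in> Cr" unfolding msc_def by (simp add: act_closed Aesc)
lemma msc_0: "x \<in> Cr \<Longrightarrow> msc eps M 0 x = z" unfolding msc_def using act_0 by simp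
lemma msc_z: "msc eps M a z = z" unfolding msc_def by (simp add: act_z Aesc)
lemma msc_msc: "x \<in> Cr \<Longrightarrow> msc eps M a (msc eps M b x) = msc eps M (a * b) x"
proof -
  assume x: "x \<in> Cr"
  have "conv delta (\<lambda>c. b * eps c) (\<lambda>c. a * eps c) = (\<lambda>c. (a * b) * eps c)"
    by (simp add: conv_epsscal_right lfun_eps lfun_scal mult.assoc)
  thus ?thesis unfolding msc_def using act_mul[of "\<lambda>c. a * eps c" "\<lambda>c. b * eps c" x] Aesc x by simp
qed
lemma act_msc: "f \<in> dualC sc \<Longrightarrow> x \<in> Cr \<Longrightarrow> act M f (msc eps M a x) = msc eps M a (act M f x)"
proof -
  assume f: "f \<in> dualC sc" and x: "x \<in> Cr"
  have "act M f (msc eps M a x) = act M (conv delta (\<lambda>c. a * eps c) f) x"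
    unfolding msc_def using act_mul[OF f Aesc x] by simp
  also have "\<dots> = act M (conv delta f (\<lambda>c. a * eps c)) x"
    using f A_D by (simp add: conv_epsscal_right conv_epsscal_left)
  also have "\<dots> = msc eps M a (act M f x)" unfolding msc_def using act_mul[OF Aesc f x] by simp
  finally show ?thesis .
qed
lemma msc_pl: "x \<in> Cr \<Longrightarrow> y \<in> Cr \<Longrightarrow> msc eps M a (pl x y) = pl (msc eps M a x) (msc eps M a y)"
  unfolding msc_def by (simp add: act_pl Aesc)
lemma msc_one: "x \<in> Cr \<Longrightarrow> msc eps M 1 x = x" unfolding msc_def by (simp add: act_eps)

lemma mlin_z: "mlin eps M \<psi> \<Longrightarrow> \<psi> z = 0"
  unfolding mlin_def using z_in pl_zl by (metis add_cancel_left_right)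

lemma msum_closed: "(\<And>x. x \<in> set L \<Longrightarrow> x \<in> Cr) \<Longrightarrow> msum M L \<in> Cr"
  unfolding msum_def by (induct L) (auto simp: z_in pl_closed)

lemma msum_map_closed: "(\<And>c u. (c,u) \<in> set L \<Longrightarrow> u \<in> Cr) \<Longrightarrow> msum M (map (\<lambda>(c,u). msc eps M (g c) u) L) \<in> Cr"
  by (rule msum_closed) (auto simp: msc_closed)

lemma mlin_msum: assumes "mlin eps M \<psi>" "\<And>c u. (c,u) \<in> set L \<Longrightarrow> u \<in> Cr"
  shows "\<psi> (msum M (map (\<lambda>(c,u). msc eps M (g c) u) L)) = (\<Sum>(c,u)\<leftarrow>L. g c * \<psi> u)"
  using assms(2)
proof (induct L)
  case Nil thus ?case using mlin_z[OF assms(1)] by (simp add: msum_def)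
next
  case (Cons p L)
  obtain c u where p: "p = (c,u)" by fastforce
  have u: "u \<in> Cr" using Cons p by auto
  have r: "msum M (map (\<lambda>(c,u). msc eps M (g c) u) L) \<in> Cr"
    using Cons by (intro msum_map_closed) auto
  have "msum M (map (\<lambda>(c,u). msc eps M (g c) u) (p # L)) =
     pl (msc eps M (g c) u) (msum M (map (\<lambda>(c,u). msc eps M (g c) u) L))"
    by (simp add: msum_def p)
  moreover have "\<And>c u. (c,u) \<in> set L \<Longrightarrow> u \<in> Cr" using Cons(2) by auto
  hence "\<psi> (msum M (map (\<lambda>(c,u). msc eps M (g c) u) L)) = (\<Sum>(c,u)\<leftarrow>L. g c * \<psi> u)"
    using Cons(1) by blast
  moreover have "\<psi> (pl (msc eps M (g c) u) (msum M (map (\<lambda>(c,u). msc eps M (g c) u) L))) =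
     \<psi> (msc eps M (g c) u) + \<psi> (msum M (map (\<lambda>(c,u). msc eps M (g c) u) L))"
    using assms(1) u r msc_closed unfolding mlin_def by blast
  moreover have "\<psi> (msc eps M (g c) u) = g c * \<psi> u" using assms(1) u unfolding mlin_def by blast
  ultimately show ?case by (simp add: p)
qed

lemma msum_zeros: "\<forall>x\<in>set L. x = z \<Longrightarrow> msum M L = z"
proof (induct L)
  case Nil thus ?case by (simp add: msum_def)
next
  case (Cons a L)
  hence "a = z" "msum M L = z" by auto
  thus ?case by (simp add: msum_def pl_zl z_in)
qed

lemma mlin_comp: assumes "mlin eps M \<psi>" "g \<in> dualC sc" shows "mlin eps M (\<lambda>x. \<psi> (act M g x))"
  unfolding mlin_def
proof (intro conjI ballI allI)
  fix x y assume "x \<in> Cr" "y \<in> Cr"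
  thus "\<psi> (act M g (pl x y)) = \<psi> (act M g x) + \<psi> (act M g y)"
    using assms act_pl[OF assms(2)] act_closed[OF assms(2)] unfolding mlin_def by metis
next
  fix a x assume "x \<in> Cr"
  thus "\<psi> (act M g (msc eps M a x)) = a * \<psi> (act M g x)"
    using assms act_msc[OF assms(2)] act_closed[OF assms(2)] unfolding mlin_def by metis
qed

end

locale rrat = rmod sc delta eps M for sc :: "'k::field \<Rightarrow> 'c::ab_group_add \<Rightarrow> 'c" and delta eps
  and M :: "('c \<Rightarrow> 'k, 'm) amod" +
  fixes lam :: "'m \<Rightarrow> ('c \<times> 'm) list"
  assumes lc: "left_comod sc delta eps M lam"
    and lact: "\<forall>f\<in>dualC sc. \<forall>x\<in>carr M. act M f x = msum M (map (\<lambda>(c,u). msc eps M (f c) u) (lam x))"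
begin

lemma lam_carr: "y \<in> Cr \<Longrightarrow> (c,u) \<in> set (lam y) \<Longrightarrow> u \<in> Cr"
  using lc unfolding left_comod_def by fastforce

lemma lam_add: "x \<in> Cr \<Longrightarrow> y \<in> Cr \<Longrightarrow> mlin eps M \<phi> \<Longrightarrow> lfun sc f \<Longrightarrow>
        (\<Sum>(c,u)\<leftarrow>lam (pl x y). f c * \<phi> u) = (\<Sum>(c,u)\<leftarrow>lam x @ lam y. f c * \<phi> u)"
  using lc unfolding left_comod_def by blast
lemma lam_scal: "x \<in> Cr \<Longrightarrow> mlin eps M \<phi> \<Longrightarrow> lfun sc f \<Longrightarrow>
        (\<Sum>(c,u)\<leftarrow>lam (msc eps M a x). f c * \<phi> u) = (\<Sum>(c,u)\<leftarrow>lam x. f (sc a c) * \<phi> u)"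
  using lc unfolding left_comod_def by blast
lemma lam_coassoc: "x \<in> Cr \<Longrightarrow> mlin eps M \<phi> \<Longrightarrow> lfun sc f \<Longrightarrow> lfun sc g \<Longrightarrow>
        (\<Sum>(c,u)\<leftarrow>lam x. (\<Sum>(p,q)\<leftarrow>delta c. f p * g q) * \<phi> u) =
        (\<Sum>(c,u)\<leftarrow>lam x. f c * (\<Sum>(d,p)\<leftarrow>lam u. g d * \<phi> p))"
  using lc unfolding left_comod_def by blast
lemma lam_counit: "x \<in> Cr \<Longrightarrow> msum M (map (\<lambda>(c,u). msc eps M (eps c) u) (lam x)) = x"
  using lc unfolding left_comod_def by blast
lemma act_lam: "f \<in> dualC sc \<Longrightarrow> x \<in> Cr \<Longrightarrow> act M f x = msum M (map (\<lambda>(c,u). msc eps M (f c) u) (lam x))"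
  using lact by blast

definition Lam where "Lam h \<phi> y = (\<Sum>(c,u)\<leftarrow>lam y. h c * \<phi> u)"

lemma Lam_mlin: assumes "mlin eps M \<phi>" "lfun sc h" shows "mlin eps M (Lam h \<phi>)"
  unfolding mlin_def Lam_def
proof (intro conjI ballI allI)
  fix x y assume "x \<in> Cr" "y \<in> Cr"
  thus "(\<Sum>(c,u)\<leftarrow>lam (pl x y). h c * \<phi> u) = (\<Sum>(c,u)\<leftarrow>lam x. h c * \<phi> u) + (\<Sum>(c,u)\<leftarrow>lam y. h c * \<phi> u)"
    using lam_add[OF _ _ assms(1,2)] by simp
next
  fix a x assume "x \<in> Cr"
  show "(\<Sum>(c,u)\<leftarrow>lam (msc eps M a x). h c * \<phi> u) = a * (\<Sum>(c,u)\<leftarrow>lam x. h c * \<phi> u)"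
  proof -
    have "(\<Sum>(c,u)\<leftarrow>lam (msc eps M a x). h c * \<phi> u) = (\<Sum>(c,u)\<leftarrow>lam x. h (sc a c) * \<phi> u)"
      using lam_scal[OF \<open>x \<in> Cr\<close> assms(1,2)] by simp
    also have "\<dots> = (\<Sum>(c,u)\<leftarrow>lam x. a * (h c * \<phi> u))"
      by (rule arg_cong[where f=sum_list], rule map_cong, simp) (auto simp: lfunD(2)[OF assms(2)])
    also have "\<dots> = a * (\<Sum>(c,u)\<leftarrow>lam x. h c * \<phi> u)"
      by (simp add: case_prod_unfold sum_list_map_mult)
    finally show ?thesis .
  qed
qed

definition theta where "theta \<phi> y = (\<Sum>(c,u)\<leftarrow>lam y. sc (\<phi> u) c)"

lemma h_theta: "lfun sc h \<Longrightarrow> h (theta \<phi> y) = Lam h \<phi> y"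
  unfolding theta_def Lam_def by (simp add: lfun_sum_list case_prod_unfold lfunD mult.commute)

lemma theta_pl: assumes "mlin eps M \<phi>" "x \<in> Cr" "y \<in> Cr" shows "theta \<phi> (pl x y) = theta \<phi> x + theta \<phi> y"
proof (rule sep)
  fix h assume h: "lfun sc h"
  have "Lam h \<phi> (pl x y) = Lam h \<phi> x + Lam h \<phi> y" using Lam_mlin[OF assms(1) h] assms(2,3) unfolding mlin_def by blast
  thus "h (theta \<phi> (pl x y)) = h (theta \<phi> x + theta \<phi> y)"
    using h_theta[OF h, of \<phi>] lfunD(1)[OF h, of "theta \<phi> x" "theta \<phi> y"] by simp
qed

lemma theta_msc: assumes "mlin eps M \<phi>" "x \<in> Cr" shows "theta \<phi> (msc eps M a x) = sc a (theta \<phi> x)"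
proof (rule sep)
  fix h assume h: "lfun sc h"
  have "Lam h \<phi> (msc eps M a x) = a * Lam h \<phi> x" using Lam_mlin[OF assms(1) h] assms(2) unfolding mlin_def by blast
  thus "h (theta \<phi> (msc eps M a x)) = h (sc a (theta \<phi> x))"
    using h_theta[OF h, of \<phi>] lfunD(2)[OF h, of a "theta \<phi> x"] by simp
qed

lemma theta_z: assumes "mlin eps M \<phi>" shows "theta \<phi> z = 0"
proof (rule sep)
  fix h assume h: "lfun sc h"
  show "h (theta \<phi> z) = h 0" using h_theta[OF h, of \<phi> z] mlin_z[OF Lam_mlin[OF assms h]] lfun_zero[OF h] by simp
qed

lemma Lam_act: assumes "mlin eps M \<phi>" "lfun sc h" "g \<in> dualC sc" "y \<in> Cr"
  shows "Lam h \<phi> (act M g y) = (\<Sum>(c,u)\<leftarrow>lam y. g c * Lam h \<phi> u)"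
  using mlin_msum[OF Lam_mlin[OF assms(1,2)], of "lam y" g] act_lam[OF assms(3,4)] lam_carr[OF assms(4)]
  by simp

lemma theta_act: assumes ph: "mlin eps M \<phi>" and g: "g \<in> dualC sc" and y: "y \<in> Cr"
  shows "theta \<phi> (act M g y) = ra (theta \<phi> y) g"
proof (rule sep)
  fix h assume h: "lfun sc h"
  have gl: "lfun sc g" using g by (simp add: A_D)
  have "h (theta \<phi> (act M g y)) = (\<Sum>(c,u)\<leftarrow>lam y. g c * Lam h \<phi> u)"
    using h_theta[OF h] Lam_act[OF ph h g y] by simp
  also have "\<dots> = (\<Sum>(c,u)\<leftarrow>lam y. g c * (\<Sum>(d,p)\<leftarrow>lam u. h d * \<phi> p))"
    unfolding Lam_def by simp
  also have "\<dots> = (\<Sum>(c,u)\<leftarrow>lam y. (\<Sum>(p,q)\<leftarrow>delta c. g p * h q) * \<phi> u)"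
    using lam_coassoc[OF y ph gl h] by simp
  also have "\<dots> = (\<Sum>(c,u)\<leftarrow>lam y. conv delta g h c * \<phi> u)"
    by (simp add: conv_apply)
  also have "\<dots> = conv delta g h (theta \<phi> y)"
    using h_theta[OF conv_lfun[OF gl h]] by (simp add: Lam_def)
  also have "\<dots> = h (ra (theta \<phi> y) g)"
    by (simp add: h_ra[OF h])
  finally show "h (theta \<phi> (act M g y)) = h (ra (theta \<phi> y) g)" .
qed

lemma eps_theta: assumes ph: "mlin eps M \<phi>" and y: "y \<in> Cr" shows "eps (theta \<phi> y) = \<phi> y"
proof -
  have "eps (theta \<phi> y) = (\<Sum>(c,u)\<leftarrow>lam y. eps c * \<phi> u)"
    by (simp add: h_theta lfun_eps Lam_def)
  also have "\<dots> = \<phi> (msum M (map (\<lambda>(c,u). msc eps M (eps c) u) (lam y)))"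
    using mlin_msum[OF ph, of "lam y" eps] lam_carr[OF y] by simp
  also have "\<dots> = \<phi> y" using lam_counit[OF y] by simp
  finally show ?thesis .
qed

lemma la_theta: assumes ph: "mlin eps M \<phi>" and g: "g \<in> dualC sc" and y: "y \<in> Cr"
  shows "la g (theta \<phi> y) = theta (\<lambda>x. \<phi> (act M g x)) y"
proof (rule sep)
  fix h assume h: "lfun sc h"
  have gl: "lfun sc g" using g by (simp add: A_D)
  have "h (la g (theta \<phi> y)) = (\<Sum>(c,u)\<leftarrow>lam y. conv delta h g c * \<phi> u)"
    by (simp add: h_la[OF h] h_theta conv_lfun[OF h gl] Lam_def)
  also have "\<dots> = (\<Sum>(c,u)\<leftarrow>lam y. h c * (\<Sum>(d,p)\<leftarrow>lam u. g d * \<phi> p))"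
    using lam_coassoc[OF y ph h gl] by (simp add: conv_apply)
  also have "\<dots> = (\<Sum>(c,u)\<leftarrow>lam y. h c * \<phi> (act M g u))"
  proof -
    have "\<phi> (act M g u) = (\<Sum>(d,p)\<leftarrow>lam u. g d * \<phi> p)" if cu: "(c,u) \<in> set (lam y)" for c u
    proof -
      have u: "u \<in> Cr" using lam_carr[OF y cu] .
      show ?thesis using mlin_msum[OF ph, of "lam u" g] act_lam[OF g u] lam_carr[OF u] by simp
    qed
    thus ?thesis by (intro arg_cong[where f=sum_list] map_cong) auto
  qed
  also have "\<dots> = h (theta (\<lambda>x. \<phi> (act M g x)) y)"
    by (simp add: h_theta[OF h] Lam_def)
  finally show "h (la g (theta \<phi> y)) = h (theta (\<lambda>x. \<phi> (act M g x)) y)" .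
qed

end

definition fsc :: "'k::field \<Rightarrow> ('c \<Rightarrow> 'k) \<Rightarrow> ('c \<Rightarrow> 'k)" where "fsc a f = (\<lambda>c. a * f c)"

lemma vs_fsc: "vector_space (fsc :: 'k::field \<Rightarrow> ('c \<Rightarrow> 'k) \<Rightarrow> ('c \<Rightarrow> 'k))"
  by unfold_locales (auto simp: fsc_def fun_eq_iff algebra_simps plus_fun_def)

locale rsim = rmod sc delta eps M for sc :: "'k::field \<Rightarrow> 'c::ab_group_add \<Rightarrow> 'c" and delta eps
  and M :: "('c \<Rightarrow> 'k, 'm) amod" +
  assumes simple: "simple_on sc M"
begin

lemma gen: assumes x: "x \<in> Cr" "x \<noteq> z" shows "Cr = {act M g x | g. g \<in> dualC sc}"
proof -
  let ?N = "{act M g x | g. g \<in> dualC sc}"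
  have sub: "submod sc M ?N" unfolding submod_def
  proof (intro conjI ballI)
    show "?N \<subseteq> Cr" using act_closed x by blast
    show "z \<in> ?N" using act_0[OF x(1)] A0 by (metis (mono_tags, lifting) mem_Collect_eq)
  next
    fix a b assume "a \<in> ?N" "b \<in> ?N"
    then obtain f g where "f \<in> dualC sc" "g \<in> dualC sc" "a = act M f x" "b = act M g x" by blast
    moreover have "(\<lambda>c. f c + g c) \<in> dualC sc" using calculation by (simp add: A_I A_D lfun_add)
    ultimately show "pls M a b \<in> ?N" using act_fadd x by (metis (mono_tags, lifting) mem_Collect_eq)
  next
    fix f a assume f: "f \<in> dualC sc" and "a \<in> ?N"
    then obtain g where "g \<in> dualC sc" "a = act M g x" by blast
    moreover have "conv delta g f \<in> dualC sc" using calculation f by (simp add: conv_A)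
    ultimately show "act M f a \<in> ?N" using act_mul[OF f _ x(1)] by (metis (mono_tags, lifting) mem_Collect_eq)
  qed
  have "x \<in> ?N" using act_eps[OF x(1)] Aeps by (metis (mono_tags, lifting) mem_Collect_eq)
  hence "?N \<noteq> {z}" using x by blast
  thus ?thesis using simple sub unfolding simple_on_def by blast
qed

lemma exists_functional: assumes x: "x \<in> Cr" "x \<noteq> z" shows "\<exists>\<phi>. mlin eps M \<phi> \<and> \<phi> x = 1"
proof -
  interpret F: vector_space "fsc :: 'k \<Rightarrow> ('c \<Rightarrow> 'k) \<Rightarrow> ('c \<Rightarrow> 'k)" by (rule vs_fsc)
  define K where "K = {g. g \<in> dualC sc \<and> act M g x = z}"
  have K: "F.subspace K" unfolding F.subspace_def K_def
  proof (intro conjI ballI allI)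
    show "0 \<in> {g \<in> dualC sc. act M g x = z}" using A0 act_0[OF x(1)] by (simp add: zero_fun_def)
  next
    fix a b assume "a \<in> {g \<in> dualC sc. act M g x = z}" "b \<in> {g \<in> dualC sc. act M g x = z}"
    thus "a + b \<in> {g \<in> dualC sc. act M g x = z}"
      using act_fadd[of a b x] x z_in pl_zl by (simp add: plus_fun_def A_I A_D lfun_add)
  next
    fix c a assume a: "a \<in> {g \<in> dualC sc. act M g x = z}"
    have "fsc c a = conv delta a (\<lambda>y. c * eps y)" using a A_D by (simp add: fsc_def conv_epsscal_right)
    hence "act M (fsc c a) x = msc eps M c (act M a x)" using act_mul[OF Aesc _ x(1), of a c] a
      by (simp add: msc_def)
    thus "fsc c a \<in> {g \<in> dualC sc. act M g x = z}" using a msc_z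
      by (simp add: fsc_def A_I A_D lfun_scal)
  qed
  have epsnz: "eps \<noteq> 0"
  proof
    assume "eps = 0"
    hence "act M eps x = z" using act_0[OF x(1)] by (simp add: zero_fun_def)
    thus False using act_eps[OF x(1)] x by simp
  qed
  have ind: "F.independent {eps}" using epsnz by simp
  have int: "F.span {eps} \<inter> K \<subseteq> {0}"
  proof
    fix g assume g: "g \<in> F.span {eps} \<inter> K"
    then obtain k where gk: "g = fsc k eps" using F.span_singleton by blast
    have "act M (\<lambda>c. k * eps c) x = z" using g gk K_def by (simp add: fsc_def)
    hence mz: "msc eps M k x = z" by (simp add: msc_def)
    have "k = 0"
    proof (rule ccontr)
      assume "k \<noteq> 0"
      have "x = msc eps M (inverse k * k) x" using \<open>k \<noteq> 0\<close> msc_one[OF x(1)] by simp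
      also have "\<dots> = msc eps M (inverse k) (msc eps M k x)" using msc_msc[OF x(1)] by simp
      also have "\<dots> = z" using mz msc_z by simp
      finally show False using x by simp
    qed
    thus "g \<in> {0}" using gk by (simp add: fsc_def zero_fun_def)
  qed
  obtain \<psi> where psi: "Vector_Spaces.linear fsc (*) \<psi>" "\<forall>g\<in>K. \<psi> g = 0" "\<forall>b\<in>{eps}. \<psi> b = (\<lambda>_. 1) b"
    using F.ext_functional[OF K ind int, of "\<lambda>_. 1"] by blast
  have padd: "\<psi> (a + b) = \<psi> a + \<psi> b" for a b using psi(1) by (simp add: linear_iff)
  have pscal: "\<psi> (fsc c a) = c * \<psi> a" for c a using psi(1) by (simp add: linear_iff)
  have psi_eq: "\<psi> g = \<psi> g'" if g: "g \<in> dualC sc" "g' \<in> dualC sc" "act M g x = act M g' x" for g g'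
  proof -
    define d where "d = (\<lambda>c. g c - g' c)"
    have dA: "d \<in> dualC sc" using g by (simp add: d_def A_I A_D lfun_diff_fun)
    have gd: "g = (\<lambda>c. d c + g' c)" by (simp add: d_def)
    have "pl (act M d x) (act M g' x) = pl z (act M g' x)"
      using act_fadd[OF dA g(2) x(1)] gd g(3) pl_zl act_closed[OF g(2) x(1)] by simp
    hence "act M d x = z" using cancel act_closed dA g x z_in by blast
    hence "\<psi> d = 0" using psi(2) dA K_def by blast
    moreover have "g = d + g'" using gd by (simp add: plus_fun_def)
    ultimately show ?thesis using padd by simp
  qed
  define rep where "rep y = (SOME g. g \<in> dualC sc \<and> act M g x = y)" for y
  have rep: "rep y \<in> dualC sc \<and> act M (rep y) x = y" if "y \<in> Cr" for y
  proof -
    have "y \<in> {act M g x | g. g \<in> dualC sc}" using gen[OF x] that by simp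
    hence "\<exists>g. g \<in> dualC sc \<and> act M g x = y" by blast
    thus ?thesis unfolding rep_def by (rule someI_ex)
  qed
  define \<phi> where "\<phi> y = \<psi> (rep y)" for y
  have "mlin eps M \<phi>" unfolding mlin_def
  proof (intro conjI ballI allI)
    fix y1 y2 assume y: "y1 \<in> Cr" "y2 \<in> Cr"
    have s: "(\<lambda>c. rep y1 c + rep y2 c) \<in> dualC sc" using rep y by (simp add: A_I A_D lfun_add)
    have "act M (\<lambda>c. rep y1 c + rep y2 c) x = pl y1 y2" using act_fadd[of "rep y1" "rep y2" x] rep y x by simp
    hence "\<psi> (rep (pl y1 y2)) = \<psi> (\<lambda>c. rep y1 c + rep y2 c)"
      using psi_eq[OF _ s] rep[OF pl_closed[OF y]] by simp
    also have "(\<lambda>c. rep y1 c + rep y2 c) = rep y1 + rep y2" by (simp add: plus_fun_def)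
    also have "\<psi> (rep y1 + rep y2) = \<psi> (rep y1) + \<psi> (rep y2)" by (rule padd)
    finally show "\<phi> (pl y1 y2) = \<phi> y1 + \<phi> y2" by (simp add: \<phi>_def)
  next
    fix a y assume y: "y \<in> Cr"
    have fA: "fsc a (rep y) \<in> dualC sc" using rep y by (simp add: fsc_def A_I A_D lfun_scal)
    have "fsc a (rep y) = conv delta (rep y) (\<lambda>c. a * eps c)" using rep y A_D by (simp add: fsc_def conv_epsscal_right)
    hence "act M (fsc a (rep y)) x = msc eps M a y"
      using act_mul[OF Aesc _ x(1), of "rep y" a] rep[OF y] by (simp add: msc_def)
    hence "\<psi> (rep (msc eps M a y)) = \<psi> (fsc a (rep y))"
      using psi_eq[OF _ fA] rep[OF msc_closed[OF y]] by simp
    thus "\<phi> (msc eps M a y) = a * \<phi> y" by (simp add: \<phi>_def pscal)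
  qed
  moreover have "\<phi> x = 1"
  proof -
    have "\<psi> (rep x) = \<psi> eps" using psi_eq[OF _ Aeps] rep[OF x(1)] act_eps[OF x(1)] by simp
    thus ?thesis using psi(3) by (simp add: \<phi>_def)
  qed
  ultimately show ?thesis by blast
qed

end

lemma iso_trans:
  assumes "mod_iso sc M N" "mod_iso sc N P" shows "mod_iso sc M P"
proof -
  obtain h where h: "bij_betw h (carr M) (carr N)"
    "\<forall>x\<in>carr M. \<forall>y\<in>carr M. h (pls M x y) = pls N (h x) (h y)"
    "\<forall>f\<in>dualC sc. \<forall>x\<in>carr M. h (act M f x) = act N f (h x)"
    using assms(1) unfolding mod_iso_def by blast
  obtain k where k: "bij_betw k (carr N) (carr P)"
    "\<forall>x\<in>carr N. \<forall>y\<in>carr N. k (pls N x y) = pls P (k x) (k y)"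
    "\<forall>f\<in>dualC sc. \<forall>x\<in>carr N. k (act N f x) = act P f (k x)"
    using assms(2) unfolding mod_iso_def by blast
  have hin: "x \<in> carr M \<Longrightarrow> h x \<in> carr N" for x using h(1) bij_betwE by blast
  show ?thesis unfolding mod_iso_def
  proof (intro exI[of _ "k \<circ> h"] conjI ballI)
    show "bij_betw (k \<circ> h) (carr M) (carr P)" using h(1) k(1) by (rule bij_betw_trans)
  next
    fix x y assume "x \<in> carr M" "y \<in> carr M"
    thus "(k \<circ> h) (pls M x y) = pls P ((k \<circ> h) x) ((k \<circ> h) y)" using h(2) k(2) hin by simp
  next
    fix f x assume "f \<in> dualC sc" "x \<in> carr M"
    thus "(k \<circ> h) (act M f x) = act P f ((k \<circ> h) x)" using h(3) k(3) hin by simp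
  qed
qed

lemma iso_sym:
  assumes "mod_iso sc M N"
    and cp: "\<forall>x\<in>carr M. \<forall>y\<in>carr M. pls M x y \<in> carr M"
    and ca: "\<forall>f\<in>dualC sc. \<forall>x\<in>carr M. act M f x \<in> carr M"
  shows "mod_iso sc N M"
proof -
  obtain h where h: "bij_betw h (carr M) (carr N)"
    "\<forall>x\<in>carr M. \<forall>y\<in>carr M. h (pls M x y) = pls N (h x) (h y)"
    "\<forall>f\<in>dualC sc. \<forall>x\<in>carr M. h (act M f x) = act N f (h x)"
    using assms(1) unfolding mod_iso_def by blast
  define g where "g = the_inv_into (carr M) h"
  have inj: "inj_on h (carr M)" using h(1) bij_betw_def by blast
  have g1: "u \<in> carr N \<Longrightarrow> g u \<in> carr M" for u
    using h(1) g_def bij_betw_the_inv_into bij_betwE by blast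
  have g2: "u \<in> carr N \<Longrightarrow> h (g u) = u" for u
    using h(1) g_def f_the_inv_into_f_bij_betw by metis
  have g3: "x \<in> carr M \<Longrightarrow> g (h x) = x" for x
    using inj g_def the_inv_into_f_f by metis
  show ?thesis unfolding mod_iso_def
  proof (intro exI[of _ g] conjI ballI)
    show "bij_betw g (carr N) (carr M)" using h(1) g_def bij_betw_the_inv_into by blast
  next
    fix u v assume uv: "u \<in> carr N" "v \<in> carr N"
    have "h (pls M (g u) (g v)) = pls N u v" using h(2) g1 g2 uv by simp
    hence "g (pls N u v) = g (h (pls M (g u) (g v)))" by simp
    also have "\<dots> = pls M (g u) (g v)" using g3 cp g1 uv by blast
    finally show "g (pls N u v) = pls M (g u) (g v)" .
  next
    fix f u assume fu: "f \<in> dualC sc" "u \<in> carr N"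
    have "h (act M f (g u)) = act N f u" using h(3) g1 g2 fu by simp
    hence "g (act N f u) = g (h (act M f (g u)))" by simp
    also have "\<dots> = act M f (g u)" using g3 ca g1 fu by blast
    finally show "g (act N f u) = act M f (g u)" .
  qed
qed

context coal begin

definition rsub where "rsub T \<longleftrightarrow> VS.subspace T \<and> (\<forall>c\<in>T. \<forall>f\<in>dualC sc. ra c f \<in> T)"

definition CT :: "'c set \<Rightarrow> ('c \<Rightarrow> 'k, 'c) amod" where
  "CT T = \<lparr>carr = T, zer = 0, pls = (+), act = (\<lambda>f c. ra c f)\<rparr>"

lemma CT_simps[simp]: "carr (CT T) = T" "zer (CT T) = 0" "pls (CT T) = (+)" "act (CT T) f c = ra c f"
  by (simp_all add: CT_def)

lemma submod_rsub: assumes "submod sc (CT T) N" shows "rsub N" "N \<subseteq> T"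
proof -
  have N: "N \<subseteq> T" "0 \<in> N" "\<forall>x\<in>N. \<forall>y\<in>N. x + y \<in> N" "\<forall>f\<in>dualC sc. \<forall>x\<in>N. ra x f \<in> N"
    using assms unfolding submod_def by auto
  have "VS.subspace N" unfolding VS.subspace_def
  proof (intro conjI ballI allI)
    show "0 \<in> N" by (rule N(2))
  next
    fix x y assume "x \<in> N" "y \<in> N" thus "x + y \<in> N" using N(3) by blast
  next
    fix a x assume "x \<in> N"
    have "(\<lambda>c. a * eps c) \<in> dualC sc" by (simp add: A_I lfun_eps lfun_scal)
    hence "ra x (\<lambda>c. a * eps c) \<in> N" using N(4) \<open>x \<in> N\<close> by blast
    thus "sc a x \<in> N" by (simp add: ra_escal)
  qed
  thus "rsub N" using N(4) unfolding rsub_def by blast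
  show "N \<subseteq> T" by (rule N(1))
qed

lemma rsub_submod: "rsub N \<Longrightarrow> N \<subseteq> T \<Longrightarrow> submod sc (CT T) N"
  unfolding rsub_def submod_def by (auto simp: VS.subspace_0 VS.subspace_add)

lemma rsub_int: "rsub X \<Longrightarrow> rsub Y \<Longrightarrow> rsub (X \<inter> Y)"
  unfolding rsub_def by (auto simp: VS.subspace_inter)

lemma rsub_diff: "rsub X \<Longrightarrow> x \<in> X \<Longrightarrow> y \<in> X \<Longrightarrow> x - y \<in> X"
  unfolding rsub_def by (simp add: VS.subspace_diff)

lemma rsub_add: "rsub X \<Longrightarrow> x \<in> X \<Longrightarrow> y \<in> X \<Longrightarrow> x + y \<in> X"
  unfolding rsub_def by (simp add: VS.subspace_add)

lemma rsub_0: "rsub X \<Longrightarrow> 0 \<in> X"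
  unfolding rsub_def by (simp add: VS.subspace_0)

lemma rsub_ra: "rsub X \<Longrightarrow> x \<in> X \<Longrightarrow> f \<in> dualC sc \<Longrightarrow> ra x f \<in> X"
  unfolding rsub_def by blast

lemma simple_CT: "simple_on sc (CT T) \<Longrightarrow> T \<noteq> {0}"
  unfolding simple_on_def by simp

lemma simple_CT_sub: assumes "simple_on sc (CT T)" "rsub N" "N \<subseteq> T" shows "N = {0} \<or> N = T"
proof -
  have "submod sc (CT T) N" by (rule rsub_submod[OF assms(2,3)])
  moreover have "\<forall>N. submod sc (CT T) N \<longrightarrow> N = {0} \<or> N = T" using assms(1) unfolding simple_on_def by simp
  ultimately show ?thesis by blast
qed

fun sumset :: "'c set list \<Rightarrow> 'c set" where
  "sumset [] = {0}"
| "sumset (I # Is) = {a + b | a b. a \<in> I \<and> b \<in> sumset Is}"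

lemma rsub_sumset: "(\<And>I. I \<in> set Is \<Longrightarrow> rsub I) \<Longrightarrow> rsub (sumset Is)"
proof (induct Is)
  case Nil
  have "VS.subspace {0}" by simp
  moreover have "\<forall>c\<in>{0::'c}. \<forall>f\<in>dualC sc. ra c f \<in> {0}" by (simp add: ra_zero A_D)
  ultimately show ?case by (simp add: rsub_def)
next
  case (Cons I Is)
  hence RI: "rsub I" and RY: "rsub (sumset Is)" by auto
  have "VS.subspace (sumset (I # Is))" unfolding VS.subspace_def
  proof (intro conjI ballI allI)
    have "0 = (0::'c) + 0" by simp
    thus "0 \<in> sumset (I # Is)" using rsub_0[OF RI] rsub_0[OF RY] by (simp only: sumset.simps) blast
  next
    fix x y assume "x \<in> sumset (I # Is)" "y \<in> sumset (I # Is)"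
    then obtain a b a' b' where "x = a + b" "y = a' + b'" "a \<in> I" "a' \<in> I" "b \<in> sumset Is" "b' \<in> sumset Is" by auto
    moreover have "x + y = (a + a') + (b + b')" using calculation by (simp add: algebra_simps)
    moreover have "a + a' \<in> I" "b + b' \<in> sumset Is" using calculation rsub_add[OF RI] rsub_add[OF RY] by auto
    ultimately show "x + y \<in> sumset (I # Is)" by (simp only: sumset.simps) blast
  next
    fix c x assume "x \<in> sumset (I # Is)"
    then obtain a b where "x = a + b" "a \<in> I" "b \<in> sumset Is" by auto
    moreover have "sc c x = sc c a + sc c b" using calculation by (simp add: VS.scale_right_distrib)
    moreover have "sc c a \<in> I" "sc c b \<in> sumset Is" using calculation RI RY unfolding rsub_def
      by (auto simp: VS.subspace_scale)
    ultimately show "sc c x \<in> sumset (I # Is)" by (simp only: sumset.simps) blast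
  qed
  moreover have "\<forall>x\<in>sumset (I # Is). \<forall>f\<in>dualC sc. ra x f \<in> sumset (I # Is)"
  proof (intro ballI)
    fix x f assume "x \<in> sumset (I # Is)" and f: "f \<in> dualC sc"
    then obtain a b where "x = a + b" "a \<in> I" "b \<in> sumset Is" by auto
    moreover have "ra x f = ra a f + ra b f" using calculation f by (simp add: ra_add A_D)
    moreover have "ra a f \<in> I" "ra b f \<in> sumset Is" using calculation rsub_ra[OF RI] rsub_ra[OF RY] f by auto
    ultimately show "ra x f \<in> sumset (I # Is)" by (simp only: sumset.simps) blast
  qed
  ultimately show ?case by (simp add: rsub_def)
qed

lemma key_sum:
  assumes T: "rsub T" "simple_on sc (CT T)"
  and Is: "\<And>I. I \<in> set Is \<Longrightarrow> rsub I \<and> (I = {0} \<or> simple_on sc (CT I))"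
  and sub: "T \<subseteq> sumset Is"
  shows "\<exists>I\<in>set Is. I \<noteq> {0} \<and> mod_iso sc (CT T) (CT I)"
  using Is sub
proof (induct Is)
  case Nil
  hence "T \<subseteq> {0}" by simp
  moreover have "0 \<in> T" using rsub_0[OF T(1)] .
  ultimately show ?case using simple_CT[OF T(2)] by blast
next
  case (Cons I Is)
  have RI: "rsub I" and SI: "I = {0} \<or> simple_on sc (CT I)" using Cons.prems by auto
  have RY: "rsub (sumset Is)" using Cons.prems by (intro rsub_sumset) auto
  let ?Y = "sumset Is"
  have TnZ: "T \<noteq> {0}" using simple_CT[OF T(2)] .
  show ?case
  proof (cases "T \<inter> ?Y = {0}")
    case False
    have "T \<inter> ?Y = {0} \<or> T \<inter> ?Y = T" using simple_CT_sub[OF T(2) rsub_int[OF T(1) RY]] by blast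
    hence "T \<subseteq> ?Y" using False by blast
    thus ?thesis using Cons by auto
  next
    case TY: True
    have Inz: "I \<noteq> {0}"
    proof
      assume "I = {0}"
      hence "T \<subseteq> ?Y" using Cons.prems(2) by auto
      hence "T = {0}" using TY by blast
      thus False using TnZ by simp
    qed
    hence SI': "simple_on sc (CT I)" using SI by simp
    have IY: "I \<inter> ?Y = {0}"
    proof -
      have "I \<inter> ?Y = {0} \<or> I \<inter> ?Y = I" using simple_CT_sub[OF SI' rsub_int[OF RI RY]] by blast
      moreover have "I \<inter> ?Y \<noteq> I"
      proof
        assume "I \<inter> ?Y = I"
        hence IY': "I \<subseteq> ?Y" by blast
        have "T \<subseteq> ?Y"
        proof
          fix t assume "t \<in> T"
          then obtain a b where "t = a + b" "a \<in> I" "b \<in> ?Y" using Cons.prems(2) by auto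
          thus "t \<in> ?Y" using IY' rsub_add[OF RY] by blast
        qed
        hence "T = {0}" using TY by blast
        thus False using TnZ by simp
      qed
      ultimately show ?thesis by blast
    qed
    have uniq: "i = i'" if "i \<in> I" "i' \<in> I" "t - i \<in> ?Y" "t - i' \<in> ?Y" for t i i'
    proof -
      have "i - i' = (t - i') - (t - i)" by (simp add: algebra_simps)
      hence "i - i' \<in> ?Y" using rsub_diff[OF RY that(4) that(3)] by simp
      moreover have "i - i' \<in> I" using rsub_diff[OF RI that(1,2)] .
      ultimately have "i - i' = 0" using IY by blast
      thus ?thesis by simp
    qed
    define p where "p t = (SOME i. i \<in> I \<and> t - i \<in> ?Y)" for t
    have pspec: "p t \<in> I \<and> t - p t \<in> ?Y" if tT: "t \<in> T" for t
    proof -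
      have "t \<in> sumset (I # Is)" using Cons.prems(2) tT by blast
      then obtain a b where "t = a + b" "a \<in> I" "b \<in> ?Y" by auto
      hence "\<exists>i. i \<in> I \<and> t - i \<in> ?Y" by (intro exI[of _ a]) simp
      thus ?thesis unfolding p_def by (rule someI_ex)
    qed
    have pI: "t \<in> T \<Longrightarrow> i \<in> I \<Longrightarrow> t - i \<in> ?Y \<Longrightarrow> p t = i" for t i
      using uniq pspec by blast
    have padd: "p (t1 + t2) = p t1 + p t2" if "t1 \<in> T" "t2 \<in> T" for t1 t2
    proof (rule pI)
      show "t1 + t2 \<in> T" using rsub_add[OF T(1) that] .
      show "p t1 + p t2 \<in> I" using rsub_add[OF RI] pspec that by blast
      have e: "t1 + t2 - (p t1 + p t2) = (t1 - p t1) + (t2 - p t2)" by (simp add: algebra_simps)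
      have "(t1 - p t1) + (t2 - p t2) \<in> ?Y" using rsub_add[OF RY] pspec that by blast
      thus "t1 + t2 - (p t1 + p t2) \<in> ?Y" by (simp only: e)
    qed
    have pra: "p (ra t f) = ra (p t) f" if "t \<in> T" "f \<in> dualC sc" for t f
    proof (rule pI)
      show "ra t f \<in> T" using rsub_ra[OF T(1) that] .
      show "ra (p t) f \<in> I" using rsub_ra[OF RI] pspec that by blast
      have e: "ra t f - ra (p t) f = ra (t - p t) f" using that(2) by (simp add: ra_diff A_D)
      have "ra (t - p t) f \<in> ?Y" using rsub_ra[OF RY] pspec that by blast
      thus "ra t f - ra (p t) f \<in> ?Y" by (simp only: e)
    qed
    have p0: "p 0 = 0" using pI[of 0 0] rsub_0[OF T(1)] rsub_0[OF RI] rsub_0[OF RY] by simp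
    have pinj: "inj_on p T"
    proof (rule inj_onI)
      fix t1 t2 assume t: "t1 \<in> T" "t2 \<in> T" "p t1 = p t2"
      have "t1 - t2 = (t1 - p t1) - (t2 - p t2)" using t(3) by (simp add: algebra_simps)
      moreover have "(t1 - p t1) - (t2 - p t2) \<in> ?Y" using rsub_diff[OF RY] pspec t(1,2) by blast
      ultimately have "t1 - t2 \<in> ?Y" by simp
      moreover have "t1 - t2 \<in> T" using rsub_diff[OF T(1) t(1,2)] .
      ultimately have "t1 - t2 = 0" using TY by blast
      thus "t1 = t2" by simp
    qed
    have imgsub: "rsub (p ` T)" unfolding rsub_def VS.subspace_def
    proof (intro conjI ballI allI)
      show "0 \<in> p ` T" using p0 rsub_0[OF T(1)] by force
    next
      fix x y assume "x \<in> p ` T" "y \<in> p ` T"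
      then obtain t1 t2 where "t1 \<in> T" "t2 \<in> T" "x = p t1" "y = p t2" by auto
      thus "x + y \<in> p ` T" using padd rsub_add[OF T(1)] by (metis image_eqI)
    next
      fix c x assume "x \<in> p ` T"
      then obtain t where t: "t \<in> T" "x = p t" by auto
      have e: "(\<lambda>y. c * eps y) \<in> dualC sc" by (simp add: A_I lfun_eps lfun_scal)
      have "sc c x = p (ra t (\<lambda>y. c * eps y))" using pra[OF t(1) e] t by (simp add: ra_escal)
      thus "sc c x \<in> p ` T" using rsub_ra[OF T(1) t(1) e] by blast
    next
      fix x f assume "x \<in> p ` T" "f \<in> dualC sc"
      then obtain t where t: "t \<in> T" "x = p t" by auto
      thus "ra x f \<in> p ` T" using pra[OF t(1) \<open>f \<in> dualC sc\<close>] rsub_ra[OF T(1) t(1) \<open>f \<in> dualC sc\<close>]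
        by (metis image_eqI)
    qed
    have imgI: "p ` T \<subseteq> I" using pspec by blast
    have "p ` T \<noteq> {0}"
    proof
      assume a: "p ` T = {0}"
      obtain t where t: "t \<in> T" "t \<noteq> 0" using TnZ rsub_0[OF T(1)] by blast
      have "p t \<in> p ` T" using t by blast
      hence "p t = p 0" using a p0 by simp
      hence "t = 0" using inj_onD[OF pinj _ t(1) rsub_0[OF T(1)]] by blast
      thus False using t by simp
    qed
    hence img: "p ` T = I" using simple_CT_sub[OF SI' imgsub imgI] by blast
    have "mod_iso sc (CT T) (CT I)" unfolding mod_iso_def
    proof (intro exI[of _ p] conjI ballI)
      show "bij_betw p (carr (CT T)) (carr (CT I))" using pinj img by (simp add: bij_betw_def)
    next
      fix x y assume "x \<in> carr (CT T)" "y \<in> carr (CT T)"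
      thus "p (pls (CT T) x y) = pls (CT I) (p x) (p y)" using padd by simp
    next
      fix f x assume "f \<in> dualC sc" "x \<in> carr (CT T)"
      thus "p (act (CT T) f x) = act (CT I) f (p x)" using pra by simp
    qed
    thus ?thesis using Inz by auto
  qed
qed

end

locale rsr = rrat sc delta eps M lam + rsim sc delta eps M
  for sc :: "'k::field \<Rightarrow> 'c::ab_group_add \<Rightarrow> 'c" and delta eps and M :: "('c \<Rightarrow> 'k, 'm) amod" and lam
begin

definition Im where "Im \<phi> = theta \<phi> ` Cr"

lemma Im_rsub: assumes ph: "mlin eps M \<phi>" shows "rsub (Im \<phi>)"
  unfolding rsub_def VS.subspace_def Im_def
proof (intro conjI ballI allI)
  show "0 \<in> theta \<phi> ` Cr" using theta_z[OF ph] z_in by force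
next
  fix x y assume "x \<in> theta \<phi> ` Cr" "y \<in> theta \<phi> ` Cr"
  then obtain a b where "a \<in> Cr" "b \<in> Cr" "x = theta \<phi> a" "y = theta \<phi> b" by auto
  thus "x + y \<in> theta \<phi> ` Cr" using theta_pl[OF ph] pl_closed by (metis image_eqI)
next
  fix c x assume "x \<in> theta \<phi> ` Cr"
  then obtain a where "a \<in> Cr" "x = theta \<phi> a" by auto
  thus "sc c x \<in> theta \<phi> ` Cr" using theta_msc[OF ph] msc_closed by (metis image_eqI)
next
  fix x f assume "x \<in> theta \<phi> ` Cr" "f \<in> dualC sc"
  then obtain a where "a \<in> Cr" "x = theta \<phi> a" by auto
  thus "ra x f \<in> theta \<phi> ` Cr" using theta_act[OF ph \<open>f \<in> dualC sc\<close>] act_closed[OF \<open>f \<in> dualC sc\<close>]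
    by (metis image_eqI)
qed

lemma Im_simple: assumes ph: "mlin eps M \<phi>" and nz: "Im \<phi> \<noteq> {0}" shows "simple_on sc (CT (Im \<phi>))"
  unfolding simple_on_def
proof (intro conjI allI impI)
  show "carr (CT (Im \<phi>)) \<noteq> {zer (CT (Im \<phi>))}" using nz by simp
next
  fix N assume N: "submod sc (CT (Im \<phi>)) N"
  have RN: "rsub N" "N \<subseteq> Im \<phi>" using submod_rsub[OF N] by auto
  let ?P = "{m \<in> Cr. theta \<phi> m \<in> N}"
  have "submod sc M ?P" unfolding submod_def
  proof (intro conjI ballI)
    show "?P \<subseteq> Cr" by blast
    show "z \<in> ?P" using z_in theta_z[OF ph] rsub_0[OF RN(1)] by simp
  next
    fix x y assume "x \<in> ?P" "y \<in> ?P"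
    thus "pl x y \<in> ?P" using pl_closed theta_pl[OF ph] rsub_add[OF RN(1)] by simp
  next
    fix f x assume "f \<in> dualC sc" "x \<in> ?P"
    thus "act M f x \<in> ?P" using act_closed theta_act[OF ph] rsub_ra[OF RN(1)] by simp
  qed
  hence "?P = {z} \<or> ?P = Cr" using simple unfolding simple_on_def by blast
  thus "N = {zer (CT (Im \<phi>))} \<or> N = carr (CT (Im \<phi>))"
  proof
    assume P: "?P = {z}"
    have "N \<subseteq> {0}"
    proof
      fix n assume "n \<in> N"
      then obtain m where m: "m \<in> Cr" "n = theta \<phi> m" using RN(2) Im_def by auto
      hence "m \<in> ?P" using \<open>n \<in> N\<close> by simp
      hence "m = z" using P by blast
      thus "n \<in> {0}" using m theta_z[OF ph] by simp
    qed
    thus ?thesis using rsub_0[OF RN(1)] by auto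
  next
    assume P: "?P = Cr"
    have "Im \<phi> \<subseteq> N" unfolding Im_def using P by blast
    thus ?thesis using RN(2) by simp
  qed
qed

lemma Im_iso: assumes ph: "mlin eps M \<phi>" and nz: "Im \<phi> \<noteq> {0}" shows "mod_iso sc M (CT (Im \<phi>))"
proof -
  let ?N = "{m \<in> Cr. theta \<phi> m = 0}"
  have "submod sc M ?N" unfolding submod_def
  proof (intro conjI ballI)
    show "?N \<subseteq> Cr" by blast
    show "z \<in> ?N" using z_in theta_z[OF ph] by simp
  next
    fix x y assume "x \<in> ?N" "y \<in> ?N"
    thus "pl x y \<in> ?N" using pl_closed theta_pl[OF ph] by simp
  next
    fix f x assume "f \<in> dualC sc" "x \<in> ?N"
    thus "act M f x \<in> ?N" using act_closed theta_act[OF ph] ra_zero A_D by simp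
  qed
  hence "?N = {z} \<or> ?N = Cr" using simple unfolding simple_on_def by blast
  moreover have "?N \<noteq> Cr"
  proof
    assume "?N = Cr"
    hence "Im \<phi> \<subseteq> {0}" unfolding Im_def by blast
    thus False using nz Im_rsub[OF ph] rsub_0 by blast
  qed
  ultimately have N: "?N = {z}" by blast
  have inj: "inj_on (theta \<phi>) Cr"
  proof (rule inj_onI)
    fix a b assume ab: "a \<in> Cr" "b \<in> Cr" "theta \<phi> a = theta \<phi> b"
    obtain nb where nb: "nb \<in> Cr" "pl b nb = z" using neg_ex ab by blast
    have "theta \<phi> (pl a nb) = theta \<phi> a + theta \<phi> nb" using theta_pl[OF ph] ab nb by simp
    also have "\<dots> = theta \<phi> (pl b nb)" using theta_pl[OF ph, of b nb] ab nb by simp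
    also have "\<dots> = 0" using nb theta_z[OF ph] by simp
    finally have "pl a nb \<in> ?N" using pl_closed ab nb by simp
    hence "pl a nb = pl b nb" using N nb by simp
    thus "a = b" using cancel ab nb by blast
  qed
  show ?thesis unfolding mod_iso_def
  proof (intro exI[of _ "theta \<phi>"] conjI ballI)
    show "bij_betw (theta \<phi>) Cr (carr (CT (Im \<phi>)))" using inj by (simp add: bij_betw_def Im_def)
  next
    fix x y assume "x \<in> Cr" "y \<in> Cr"
    thus "theta \<phi> (pl x y) = pls (CT (Im \<phi>)) (theta \<phi> x) (theta \<phi> y)" using theta_pl[OF ph] by simp
  next
    fix f x assume "f \<in> dualC sc" "x \<in> Cr"
    thus "theta \<phi> (act M f x) = act (CT (Im \<phi>)) f (theta \<phi> x)" using theta_act[OF ph] by simp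
  qed
qed

end

locale dens = coal sc delta eps for sc :: "'k::field \<Rightarrow> 'c::ab_group_add \<Rightarrow> 'c" and delta eps +
  fixes S :: "('c \<Rightarrow> 'k, 'm) amod set"
  assumes Sinf: "infinite S"
    and Sprop: "\<forall>M\<in>S. simple_right sc delta eps M \<and> rational_right sc delta eps M"
    and Snoniso: "\<forall>M\<in>S. \<forall>N\<in>S. M \<noteq> N \<longrightarrow> \<not> mod_iso sc M N"
begin

lemma A0': "(\<lambda>c. 0) \<in> dualC sc" by (simp add: A_I lfun_0)
lemma Aeps': "eps \<in> dualC sc" by (simp add: A_I lfun_eps)

definition lamM where "lamM M = (SOME lam. left_comod sc delta eps M lam \<and>
     (\<forall>f\<in>dualC sc. \<forall>x\<in>carr M. act M f x = msum M (map (\<lambda>(c,u). msc eps M (f c) u) (lam x))))"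

lemma rsrM: assumes "M \<in> S" shows "rsr sc delta eps M (lamM M)"
proof -
  have sr: "simple_right sc delta eps M" "rational_right sc delta eps M" using Sprop assms by auto
  have "\<exists>lam. left_comod sc delta eps M lam \<and>
     (\<forall>f\<in>dualC sc. \<forall>x\<in>carr M. act M f x = msum M (map (\<lambda>(c,u). msc eps M (f c) u) (lam x)))"
    using sr(2) unfolding rational_right_def by blast
  hence l: "left_comod sc delta eps M (lamM M) \<and>
     (\<forall>f\<in>dualC sc. \<forall>x\<in>carr M. act M f x = msum M (map (\<lambda>(c,u). msc eps M (f c) u) (lamM M x)))"
    unfolding lamM_def by (rule someI_ex)
  show ?thesis
  proof (unfold_locales)
    show "right_amod sc delta eps M" using sr(1) simple_right_def by blast
    show "left_comod sc delta eps M (lamM M)" using l by blast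
    show "\<forall>f\<in>dualC sc. \<forall>x\<in>carr M. act M f x = msum M (map (\<lambda>(c,u). msc eps M (f c) u) (lamM M x))"
      using l by blast
    show "simple_on sc M" using sr(1) simple_right_def by blast
  qed
qed

definition thM where "thM M \<phi> y = (\<Sum>(c,u)\<leftarrow>lamM M y. sc (\<phi> u) c)"

lemma thM_eq: "M \<in> S \<Longrightarrow> thM M = rrat.theta sc (lamM M)"
proof -
  assume "M \<in> S"
  then interpret R: rsr sc delta eps M "lamM M" by (rule rsrM)
  show ?thesis by (rule ext)+ (simp add: thM_def R.theta_def)
qed

definition G where "G X = {thM M \<phi> y | M \<phi> y. M \<in> X \<and> mlin eps M \<phi> \<and> y \<in> carr M}"
definition W where "W X = VS.span (G X)"

lemma G_ra: assumes X: "X \<subseteq> S" and g: "g \<in> G X" and f: "f \<in> dualC sc" shows "ra g f \<in> G X"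
proof -
  obtain M \<phi> y where M: "M \<in> X" "mlin eps M \<phi>" "y \<in> carr M" "g = thM M \<phi> y" using g unfolding G_def by blast
  interpret R: rsr sc delta eps M "lamM M" using rsrM M X by blast
  have "ra g f = thM M \<phi> (act M f y)" using R.theta_act[OF M(2) f M(3)] M thM_eq X by auto
  thus ?thesis using M R.act_closed[OF f M(3)] unfolding G_def by blast
qed

lemma G_la: assumes X: "X \<subseteq> S" and g: "g \<in> G X" and f: "f \<in> dualC sc" shows "la f g \<in> G X"
proof -
  obtain M \<phi> y where M: "M \<in> X" "mlin eps M \<phi>" "y \<in> carr M" "g = thM M \<phi> y" using g unfolding G_def by blast
  interpret R: rsr sc delta eps M "lamM M" using rsrM M X by blast
  have "la f g = thM M (\<lambda>x. \<phi> (act M f x)) y" using R.la_theta[OF M(2) f M(3)] M thM_eq X by auto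
  thus ?thesis using M R.mlin_comp[OF M(2) f] unfolding G_def by blast
qed

lemma span_ra: assumes f: "f \<in> dualC sc" and H: "\<And>g. g \<in> H \<Longrightarrow> ra g f \<in> VS.span H"
  and x: "x \<in> VS.span H" shows "ra x f \<in> VS.span H"
  using x
proof (induct rule: VS.span_induct_alt)
  case base thus ?case using ra_zero[OF A_D[OF f]] VS.span_zero by simp
next
  case (step c x y)
  have "ra (sc c x + y) f = sc c (ra x f) + ra y f" using f by (simp add: ra_add ra_scale A_D)
  thus ?case using step H VS.span_add VS.span_scale by simp
qed

lemma span_la: assumes f: "f \<in> dualC sc" and H: "\<And>g. g \<in> H \<Longrightarrow> la f g \<in> VS.span H"
  and x: "x \<in> VS.span H" shows "la f x \<in> VS.span H"
  using x
proof (induct rule: VS.span_induct_alt)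
  case base
  have "la f 0 = 0" using la_add[OF A_D[OF f], of 0 0] by simp
  thus ?case using VS.span_zero by simp
next
  case (step c x y)
  have "la f (sc c x + y) = sc c (la f x) + la f y" using f by (simp add: la_add la_scale A_D)
  thus ?case using step H VS.span_add VS.span_scale by simp
qed

lemma W_rsub: assumes X: "X \<subseteq> S" shows "rsub (W X)"
  unfolding rsub_def W_def
proof (intro conjI ballI)
  show "VS.subspace (VS.span (G X))" by simp
next
  fix c f assume c: "c \<in> VS.span (G X)" and f: "f \<in> dualC sc"
  have "\<And>g. g \<in> G X \<Longrightarrow> ra g f \<in> VS.span (G X)" using G_ra[OF X _ f] VS.span_base by blast
  thus "ra c f \<in> VS.span (G X)" using span_ra[OF f _ c] by blast
qed

lemma W_la: assumes X: "X \<subseteq> S" and f: "f \<in> dualC sc" and w: "w \<in> W X" shows "la f w \<in> W X"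
proof -
  have "\<And>g. g \<in> G X \<Longrightarrow> la f g \<in> VS.span (G X)" using G_la[OF X _ f] VS.span_base by blast
  thus ?thesis using span_la[OF f _ w[unfolded W_def]] unfolding W_def by blast
qed

lemma W_mono: "X \<subseteq> Y \<Longrightarrow> W X \<subseteq> W Y"
  unfolding W_def G_def by (intro VS.span_mono) blast

definition ImM where "ImM M \<phi> = thM M \<phi> ` carr M"

lemma W_repr: assumes X: "X \<subseteq> S" and t: "t \<in> W X"
  shows "\<exists>Is. (\<forall>I\<in>set Is. \<exists>M \<phi>. M \<in> X \<and> mlin eps M \<phi> \<and> I = ImM M \<phi>) \<and> t \<in> sumset Is"
  using t unfolding W_def
proof (induct rule: VS.span_induct_alt)
  case base show ?case by (intro exI[of _ "[]"]) simp
next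
  case (step c x y)
  then obtain Is where Is: "\<forall>I\<in>set Is. \<exists>M \<phi>. M \<in> X \<and> mlin eps M \<phi> \<and> I = ImM M \<phi>" "y \<in> sumset Is" by blast
  obtain M \<phi> m where M: "M \<in> X" "mlin eps M \<phi>" "m \<in> carr M" "x = thM M \<phi> m" using step unfolding G_def by blast
  interpret R: rsr sc delta eps M "lamM M" using rsrM M X by blast
  have "sc c x = thM M \<phi> (msc eps M c m)" using R.theta_msc[OF M(2) M(3)] M thM_eq X by auto
  hence "sc c x \<in> ImM M \<phi>" using R.msc_closed[OF M(3)] unfolding ImM_def by blast
  hence "sc c x + y \<in> sumset (ImM M \<phi> # Is)" using Is(2) by auto
  thus ?case using Is(1) M by (intro exI[of _ "ImM M \<phi> # Is"]) auto
qed

lemma key: assumes X: "X \<subseteq> S" and T: "rsub T" "simple_on sc (CT T)" and TW: "T \<subseteq> W X"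
  shows "\<exists>M\<in>X. mod_iso sc M (CT T)"
proof -
  obtain t where t: "t \<in> T" "t \<noteq> 0" using simple_CT[OF T(2)] rsub_0[OF T(1)] by blast
  have "t \<in> W X" using TW t by blast
  from W_repr[OF X this]
  obtain Is where Is: "\<forall>I\<in>set Is. \<exists>M \<phi>. M \<in> X \<and> mlin eps M \<phi> \<and> I = ImM M \<phi>" "t \<in> sumset Is"
    by blast
  have IsP: "rsub I \<and> (I = {0} \<or> simple_on sc (CT I))" if II: "I \<in> set Is" for I
  proof -
    from Is(1) II have "\<exists>M \<phi>. M \<in> X \<and> mlin eps M \<phi> \<and> I = ImM M \<phi>" by blast
    then obtain M \<phi> where M: "M \<in> X" "mlin eps M \<phi>" "I = ImM M \<phi>" by blast
    interpret R: rsr sc delta eps M "lamM M" using rsrM M X by blast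
    have "I = R.Im \<phi>" using M thM_eq X by (auto simp: ImM_def R.Im_def)
    thus ?thesis using R.Im_rsub[OF M(2)] R.Im_simple[OF M(2)] by blast
  qed
  have RY: "rsub (sumset Is)" using IsP by (intro rsub_sumset) blast
  let ?N = "{ra t f | f. f \<in> dualC sc}"
  have Nsub: "submod sc (CT T) ?N" unfolding submod_def
  proof (intro conjI ballI)
    show "?N \<subseteq> carr (CT T)" using rsub_ra[OF T(1) t(1)] by auto
    have "ra t (\<lambda>c. 0) = 0" by (simp add: ra_f0)
    thus "zer (CT T) \<in> ?N" using A0' by auto
  next
    fix x y assume "x \<in> ?N" "y \<in> ?N"
    then obtain f g where fg: "f \<in> dualC sc" "g \<in> dualC sc" "x = ra t f" "y = ra t g" by auto
    hence "x + y = ra t (\<lambda>c. f c + g c)" by (simp add: ra_fadd)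
    moreover have "(\<lambda>c. f c + g c) \<in> dualC sc" using fg by (simp add: A_I A_D lfun_add)
    ultimately show "pls (CT T) x y \<in> ?N" by auto
  next
    fix f x assume f: "f \<in> dualC sc" and "x \<in> ?N"
    then obtain g where g: "g \<in> dualC sc" "x = ra t g" by auto
    hence "ra x f = ra t (conv delta g f)" using f by (simp add: ra_ra A_D)
    moreover have "conv delta g f \<in> dualC sc" using f g by (simp add: conv_A)
    ultimately show "act (CT T) f x \<in> ?N" by auto
  qed
  have "t \<in> ?N" using ra_eps[of t] Aeps' by (metis (mono_tags, lifting) mem_Collect_eq)
  hence "?N \<noteq> {0}" using t by blast
  hence NT: "?N = T" using T(2) Nsub unfolding simple_on_def by auto
  have "T \<subseteq> sumset Is" using NT rsub_ra[OF RY Is(2)] by blast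
  from key_sum[OF T IsP this]
  obtain I where I: "I \<in> set Is" "I \<noteq> {0}" "mod_iso sc (CT T) (CT I)" by blast
  from Is(1) I(1) have "\<exists>M \<phi>. M \<in> X \<and> mlin eps M \<phi> \<and> I = ImM M \<phi>" by blast
  then obtain M \<phi> where M: "M \<in> X" "mlin eps M \<phi>" "I = ImM M \<phi>" by blast
  interpret R: rsr sc delta eps M "lamM M" using rsrM M X by blast
  have IR: "I = R.Im \<phi>" using M thM_eq X by (auto simp: ImM_def R.Im_def)
  have i1: "mod_iso sc M (CT I)" using R.Im_iso[OF M(2)] IR I(2) by simp
  have i2: "mod_iso sc (CT I) (CT T)"
    by (rule iso_sym[OF I(3)]) (auto simp: rsub_add[OF T(1)] rsub_ra[OF T(1)])
  show ?thesis using iso_trans[OF i1 i2] M(1) by blast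
qed

end

context dens begin

definition J where "J = {f \<in> dualC sc. \<exists>F. finite F \<and> (\<forall>w\<in>W (S - F). f w = 0)}"

lemma J_A: "f \<in> J \<Longrightarrow> f \<in> dualC sc" by (simp add: J_def)

lemma J_0: "(\<lambda>c. 0) \<in> J" unfolding J_def using A0' by (intro CollectI conjI exI[of _ "{}"]) auto

lemma J_add: assumes "f \<in> J" "g \<in> J" shows "(\<lambda>c. f c + g c) \<in> J"
proof -
  obtain F1 where F1: "finite F1" "\<forall>w\<in>W (S - F1). f w = 0" using assms(1) J_def by blast
  obtain F2 where F2: "finite F2" "\<forall>w\<in>W (S - F2). g w = 0" using assms(2) J_def by blast
  have "W (S - (F1 \<union> F2)) \<subseteq> W (S - F1)" "W (S - (F1 \<union> F2)) \<subseteq> W (S - F2)"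
    using W_mono[of "S - (F1 \<union> F2)" "S - F1"] W_mono[of "S - (F1 \<union> F2)" "S - F2"] by auto
  hence "\<forall>w\<in>W (S - (F1 \<union> F2)). f w + g w = 0"
  proof (intro ballI)
    fix w assume "w \<in> W (S - (F1 \<union> F2))"
    hence "w \<in> W (S - F1)" "w \<in> W (S - F2)" using \<open>W (S - (F1 \<union> F2)) \<subseteq> W (S - F1)\<close> \<open>W (S - (F1 \<union> F2)) \<subseteq> W (S - F2)\<close> by blast+
    thus "f w + g w = 0" using F1(2) F2(2) by simp
  qed
  moreover have "(\<lambda>c. f c + g c) \<in> dualC sc" using assms by (simp add: J_def A_I A_D lfun_add)
  ultimately show ?thesis unfolding J_def using F1 F2 by (intro CollectI conjI exI[of _ "F1 \<union> F2"]) auto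
qed

lemma J_left: assumes g: "g \<in> dualC sc" and f: "f \<in> J" shows "conv delta g f \<in> J"
proof -
  obtain F where F: "finite F" "\<forall>w\<in>W (S - F). f w = 0" using f J_def by blast
  have lf: "lfun sc f" using f by (simp add: J_def A_D)
  have "\<forall>w\<in>W (S - F). conv delta g f w = 0"
  proof
    fix w assume w: "w \<in> W (S - F)"
    have "ra w g \<in> W (S - F)" using rsub_ra[OF W_rsub w g] by blast
    thus "conv delta g f w = 0" using conv_as_ra[OF lf] F by simp
  qed
  moreover have "conv delta g f \<in> dualC sc" using g f by (simp add: conv_A J_def)
  ultimately show ?thesis unfolding J_def using F by blast
qed

lemma J_right: assumes g: "g \<in> dualC sc" and f: "f \<in> J" shows "conv delta f g \<in> J"
proof -
  obtain F where F: "finite F" "\<forall>w\<in>W (S - F). f w = 0" using f J_def by blast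
  have lf: "lfun sc f" using f by (simp add: J_def A_D)
  have "\<forall>w\<in>W (S - F). conv delta f g w = 0"
  proof
    fix w assume w: "w \<in> W (S - F)"
    have "la g w \<in> W (S - F)" using W_la[OF _ g w] by blast
    thus "conv delta f g w = 0" using conv_as_la[OF lf] F by simp
  qed
  moreover have "conv delta f g \<in> dualC sc" using g f by (simp add: conv_A J_def)
  ultimately show ?thesis unfolding J_def using F by blast
qed

lemma eps_notin_J: "eps \<notin> J"
proof
  assume "eps \<in> J"
  then obtain F where F: "finite F" "\<forall>w\<in>W (S - F). eps w = 0" using J_def by blast
  have "S - F \<noteq> {}" using Sinf F(1) by (metis Diff_eq_empty_iff finite_subset)
  then obtain M where M: "M \<in> S - F" by blast
  interpret R: rsr sc delta eps M "lamM M" using rsrM M by blast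
  have "carr M \<noteq> {zer M}" using R.simple unfolding simple_on_def by blast
  then obtain x where x: "x \<in> carr M" "x \<noteq> zer M" using R.z_in by blast
  obtain \<phi> where ph: "mlin eps M \<phi>" "\<phi> x = 1" using R.exists_functional[OF x] by blast
  have "thM M \<phi> x \<in> G (S - F)" unfolding G_def using M ph x by blast
  hence "thM M \<phi> x \<in> W (S - F)" unfolding W_def by (rule VS.span_base)
  moreover have "eps (thM M \<phi> x) = 1" using R.eps_theta[OF ph(1) x(1)] ph(2) thM_eq M by simp
  ultimately show False using F by simp
qed

lemma density: "\<exists>j\<in>J. \<forall>c\<in>set cs. j c = eps c"
proof -
  define P where "P = snd ` (\<Union>c\<in>set cs. set (delta c))"
  have fP: "finite P" unfolding P_def by simp
  define Gen where "Gen = {ra c f | c f. c \<in> set cs \<and> f \<in> dualC sc}"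
  define R where "R = VS.span Gen"
  have GenP: "Gen \<subseteq> VS.span P"
  proof
    fix g assume "g \<in> Gen"
    then obtain c f where cf: "c \<in> set cs" "g = ra c f" unfolding Gen_def by blast
    have "snd ` set (delta c) \<subseteq> P" unfolding P_def using cf(1) by blast
    thus "g \<in> VS.span P" using ra_in_span[of c f] VS.span_mono cf(2) by blast
  qed
  have RP: "R \<subseteq> VS.span P" unfolding R_def using VS.span_minimal[OF GenP] by simp
  have csR: "set cs \<subseteq> R"
  proof
    fix c assume "c \<in> set cs"
    hence "ra c eps \<in> Gen" unfolding Gen_def using Aeps' by blast
    thus "c \<in> R" unfolding R_def using ra_eps VS.span_base by metis
  qed
  have Rrs: "rsub R" unfolding rsub_def R_def
  proof (intro conjI ballI)
    show "VS.subspace (VS.span Gen)" by simp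
  next
    fix x g assume x: "x \<in> VS.span Gen" and g: "g \<in> dualC sc"
    have "\<And>y. y \<in> Gen \<Longrightarrow> ra y g \<in> VS.span Gen"
    proof -
      fix y assume "y \<in> Gen"
      then obtain c f where cf: "c \<in> set cs" "f \<in> dualC sc" "y = ra c f" unfolding Gen_def by blast
      hence "ra y g = ra c (conv delta f g)" using g by (simp add: ra_ra A_D)
      moreover have "conv delta f g \<in> dualC sc" using cf g by (simp add: conv_A)
      ultimately have "ra y g \<in> Gen" unfolding Gen_def using cf by blast
      thus "ra y g \<in> VS.span Gen" by (rule VS.span_base)
    qed
    thus "ra x g \<in> VS.span Gen" using span_ra[OF g _ x] by blast
  qed
  define Z where "Z F = R \<inter> W (S - F)" for F
  have Zrs: "rsub (Z F)" for F unfolding Z_def by (rule rsub_int[OF Rrs W_rsub]) blast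
  have ZP: "Z F \<subseteq> VS.span P" for F using RP Z_def by blast
  obtain F0 where F0: "finite F0" "\<And>F. finite F \<Longrightarrow> VS.dim (Z F0) \<le> VS.dim (Z F)"
    using ex_has_least_nat[of "\<lambda>F. finite F" "{}" "\<lambda>F. VS.dim (Z F)"] by auto
  have Z0: "Z F0 \<subseteq> {0}"
  proof (rule ccontr)
    assume "\<not> Z F0 \<subseteq> {0}"
    hence Znz: "Z F0 \<noteq> {0}" by blast
    have "rsub (Z F0) \<and> Z F0 \<subseteq> Z F0 \<and> Z F0 \<noteq> {0}" using Zrs Znz by blast
    from ex_has_least_nat[of "\<lambda>T. rsub T \<and> T \<subseteq> Z F0 \<and> T \<noteq> {0}", OF this, of VS.dim]
    obtain T where T: "rsub T" "T \<subseteq> Z F0" "T \<noteq> {0}"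
      and Tmin: "\<And>N. rsub N \<Longrightarrow> N \<subseteq> Z F0 \<Longrightarrow> N \<noteq> {0} \<Longrightarrow> VS.dim T \<le> VS.dim N" by blast
    have TP: "T \<subseteq> VS.span P" using T(2) ZP by blast
    have Tsim: "simple_on sc (CT T)" unfolding simple_on_def
    proof (intro conjI allI impI)
      show "carr (CT T) \<noteq> {zer (CT T)}" using T(3) by simp
    next
      fix N assume N: "submod sc (CT T) N"
      have RN: "rsub N" "N \<subseteq> T" using submod_rsub[OF N] by auto
      show "N = {zer (CT T)} \<or> N = carr (CT T)"
      proof (cases "N = {0}")
        case True thus ?thesis by simp
      next
        case False
        have "VS.dim T \<le> VS.dim N" using Tmin[OF RN(1)] RN(2) T(2) False by blast
        hence "N = T" using VS.dim_eq_subspace[of N T P] RN T(1) TP fP unfolding rsub_def by blast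
        thus ?thesis by simp
      qed
    qed
    have TW0: "T \<subseteq> W (S - F0)" using T(2) Z_def by blast
    obtain M1 where M1: "M1 \<in> S - F0" "mod_iso sc M1 (CT T)"
      using key[OF _ T(1) Tsim TW0] by blast
    define F1 where "F1 = insert M1 F0"
    have fF1: "finite F1" using F0(1) F1_def by simp
    have Z10: "Z F1 \<subseteq> Z F0" unfolding Z_def F1_def using W_mono[of "S - insert M1 F0" "S - F0"] by blast
    have "VS.dim (Z F0) \<le> VS.dim (Z F1)" using F0(2)[OF fF1] .
    hence "Z F1 = Z F0" using VS.dim_eq_subspace[of "Z F1" "Z F0" P] Zrs Z10 ZP fP unfolding rsub_def by blast
    hence TW1: "T \<subseteq> W (S - F1)" using T(2) Z_def by blast
    obtain M2 where M2: "M2 \<in> S - F1" "mod_iso sc M2 (CT T)"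
      using key[OF _ T(1) Tsim TW1] by blast
    have ne: "M1 \<noteq> M2" using M2(1) F1_def by blast
    interpret R2: rsr sc delta eps M2 "lamM M2" using rsrM M2 by blast
    have "mod_iso sc (CT T) M2" using iso_sym[OF M2(2)] R2.pl_closed R2.act_closed by blast
    hence "mod_iso sc M1 M2" using iso_trans[OF M1(2)] by blast
    thus False using Snoniso M1(1) M2(1) ne by blast
  qed
  obtain BR where BR: "BR \<subseteq> R" "VS.independent BR" "R \<subseteq> VS.span BR" "card BR = VS.dim R"
    by (rule VS.basis_exists)
  have spBR: "VS.span BR \<subseteq> R" using BR(1) VS.span_minimal[of BR R] Rrs unfolding rsub_def by blast
  have int: "VS.span BR \<inter> W (S - F0) \<subseteq> {0}" using spBR Z0 Z_def by blast
  have Wsub: "VS.subspace (W (S - F0))" using W_rsub[of "S - F0"] unfolding rsub_def by blast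
  obtain j where j: "Vector_Spaces.linear sc (*) j" "\<forall>x\<in>W (S - F0). j x = 0" "\<forall>b\<in>BR. j b = eps b"
    using VS.ext_functional[OF Wsub BR(2) int, of eps] by blast
  interpret PP: vector_space_pair sc "(*) :: 'k \<Rightarrow> 'k \<Rightarrow> 'k"
    using vs vs_field by (simp add: vector_space_pair_def)
  have le: "Vector_Spaces.linear sc (*) eps" using lfun_eps unfolding lfun_def .
  have jR: "j x = eps x" if "x \<in> R" for x
    using PP.linear_eq_on[OF j(1) le, of x BR] that BR(3) j(3) by blast
  have "j \<in> J" unfolding J_def using j F0(1) by (auto simp: dualC_def lfun_def)
  thus ?thesis using jR csR by blast
qed

end

locale quot = coal sc delta eps for sc :: "'k::field \<Rightarrow> 'c::ab_group_add \<Rightarrow> 'c" and delta eps +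
  fixes m :: "('c \<Rightarrow> 'k) \<Rightarrow> ('c \<Rightarrow> 'k) \<Rightarrow> ('c \<Rightarrow> 'k)"
    and mul :: "('c \<Rightarrow> 'k) \<Rightarrow> ('c \<Rightarrow> 'k) \<Rightarrow> ('c \<Rightarrow> 'k)"
    and L :: "('c \<Rightarrow> 'k) set"
  assumes mA: "f \<in> dualC sc \<Longrightarrow> x \<in> dualC sc \<Longrightarrow> m f x \<in> dualC sc"
  and madd_l: "m (\<lambda>c. f c + g c) x = (\<lambda>c. m f x c + m g x c)"
  and madd_r: "m f (\<lambda>c. x c + y c) = (\<lambda>c. m f x c + m f y c)"
  and mdiff_r: "m f (\<lambda>c. x c - y c) = (\<lambda>c. m f x c - m f y c)"
  and m0_l: "m (\<lambda>c. 0) x = (\<lambda>c. 0)"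
  and mneg: "x \<in> dualC sc \<Longrightarrow> m (\<lambda>c. - eps c) x = (\<lambda>c. - x c)"
  and meps_l: "x \<in> dualC sc \<Longrightarrow> m eps x = x"
  and meps_r: "f \<in> dualC sc \<Longrightarrow> m f eps = f"
  and mulA: "f \<in> dualC sc \<Longrightarrow> g \<in> dualC sc \<Longrightarrow> mul f g \<in> dualC sc"
  and massoc: "f \<in> dualC sc \<Longrightarrow> g \<in> dualC sc \<Longrightarrow> x \<in> dualC sc \<Longrightarrow> m (mul f g) x = m f (m g x)"
  and LA: "L \<subseteq> dualC sc"
  and L0: "(\<lambda>c. 0) \<in> L"
  and Ladd: "\<And>f g. f \<in> L \<Longrightarrow> g \<in> L \<Longrightarrow> (\<lambda>c. f c + g c) \<in> L"
  and Lm: "\<And>f g. g \<in> dualC sc \<Longrightarrow> f \<in> L \<Longrightarrow> m g f \<in> L"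
  and Leps: "eps \<notin> L"
  and Lmax: "\<And>L'. L' \<subseteq> dualC sc \<Longrightarrow> (\<lambda>c. 0) \<in> L' \<Longrightarrow> (\<forall>f\<in>L'. \<forall>g\<in>L'. (\<lambda>c. f c + g c) \<in> L') \<Longrightarrow>
      (\<forall>g\<in>dualC sc. \<forall>f\<in>L'. m g f \<in> L') \<Longrightarrow> L \<subseteq> L' \<Longrightarrow> eps \<notin> L' \<Longrightarrow> L' = L"
begin

lemma Aeps: "eps \<in> dualC sc" by (simp add: A_I lfun_eps)
lemma Amin: "(\<lambda>c. - eps c) \<in> dualC sc"
proof -
  have "lfun sc (\<lambda>c. 0 - eps c)" by (rule lfun_diff_fun[OF lfun_0 lfun_eps])
  thus ?thesis by (simp add: A_I)
qed
lemma A_add: "f \<in> dualC sc \<Longrightarrow> g \<in> dualC sc \<Longrightarrow> (\<lambda>c. f c + g c) \<in> dualC sc"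
  by (simp add: A_I A_D lfun_add)
lemma A_diff: "f \<in> dualC sc \<Longrightarrow> g \<in> dualC sc \<Longrightarrow> (\<lambda>c. f c - g c) \<in> dualC sc"
  by (simp add: A_I A_D lfun_diff_fun)
lemma A0: "(\<lambda>c. 0) \<in> dualC sc" by (simp add: A_I lfun_0)

lemma Lneg: assumes f: "f \<in> L" shows "(\<lambda>c. - f c) \<in> L"
proof -
  have "m (\<lambda>c. - eps c) f \<in> L" using Lm[OF Amin f] .
  moreover have "m (\<lambda>c. - eps c) f = (\<lambda>c. - f c)" using mneg f LA by blast
  ultimately show ?thesis by simp
qed

lemma Ldiff: "f \<in> L \<Longrightarrow> g \<in> L \<Longrightarrow> (\<lambda>c. f c - g c) \<in> L"
  using Ladd[OF _ Lneg[of g], of f] by simp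

definition eqv where "eqv f g \<longleftrightarrow> (\<lambda>c. f c - g c) \<in> L"

lemma eqv_refl: "eqv f f" unfolding eqv_def using L0 by simp
lemma eqv_sym: "eqv f g \<Longrightarrow> eqv g f"
  unfolding eqv_def using Lneg[of "\<lambda>c. f c - g c"] by simp
lemma eqv_trans: "eqv f g \<Longrightarrow> eqv g h \<Longrightarrow> eqv f h"
  unfolding eqv_def using Ladd[of "\<lambda>c. f c - g c" "\<lambda>c. g c - h c"] by simp
lemma eqv_add: "eqv f1 g1 \<Longrightarrow> eqv f2 g2 \<Longrightarrow> eqv (\<lambda>c. f1 c + f2 c) (\<lambda>c. g1 c + g2 c)"
  unfolding eqv_def using Ladd[of "\<lambda>c. f1 c - g1 c" "\<lambda>c. f2 c - g2 c"] by (simp add: algebra_simps)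
lemma eqv_m: "g \<in> dualC sc \<Longrightarrow> eqv f1 f2 \<Longrightarrow> eqv (m g f1) (m g f2)"
  unfolding eqv_def using Lm[of g "\<lambda>c. f1 c - f2 c"] mdiff_r by simp
lemma eqv_L: "eqv f (\<lambda>c. 0) \<Longrightarrow> f \<in> L" unfolding eqv_def by simp

definition rep where "rep f = (SOME g. g \<in> dualC sc \<and> eqv g f)"

lemma rep_spec: "f \<in> dualC sc \<Longrightarrow> rep f \<in> dualC sc \<and> eqv (rep f) f"
  unfolding rep_def by (rule someI[of _ f]) (simp add: eqv_refl)

lemma rep_A: "f \<in> dualC sc \<Longrightarrow> rep f \<in> dualC sc" using rep_spec by blast
lemma rep_eqv: "f \<in> dualC sc \<Longrightarrow> eqv (rep f) f" using rep_spec by blast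

lemma rep_cong: assumes "eqv f g" shows "rep f = rep g"
proof -
  have "(\<lambda>h. h \<in> dualC sc \<and> eqv h f) = (\<lambda>h. h \<in> dualC sc \<and> eqv h g)"
    using assms eqv_trans eqv_sym by (intro ext) blast
  thus ?thesis unfolding rep_def by simp
qed

lemma rep_eq_iff: "f \<in> dualC sc \<Longrightarrow> g \<in> dualC sc \<Longrightarrow> rep f = rep g \<longleftrightarrow> eqv f g"
proof
  assume f: "f \<in> dualC sc" and g: "g \<in> dualC sc" and e: "rep f = rep g"
  have "eqv f (rep f)" using rep_eqv[OF f] eqv_sym by blast
  moreover have "eqv (rep g) g" using rep_eqv[OF g] .
  ultimately show "eqv f g" using e eqv_trans by metis
qed (rule rep_cong)

lemma rep_rep: "f \<in> dualC sc \<Longrightarrow> rep (rep f) = rep f"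
  using rep_cong rep_eqv by blast

definition QM :: "('c \<Rightarrow> 'k, 'c \<Rightarrow> 'k) amod" where
  "QM = \<lparr>carr = rep ` dualC sc, zer = rep (\<lambda>c. 0), pls = (\<lambda>x y. rep (\<lambda>c. x c + y c)),
         act = (\<lambda>f x. rep (m f x))\<rparr>"

lemma QM_simps: "carr QM = rep ` dualC sc" "zer QM = rep (\<lambda>c. 0)"
  "pls QM x y = rep (\<lambda>c. x c + y c)" "act QM f x = rep (m f x)"
  by (simp_all add: QM_def)

lemma carrD: "x \<in> carr QM \<Longrightarrow> x \<in> dualC sc \<and> rep x = x"
  unfolding QM_simps using rep_A rep_rep by blast

lemma carrI: "f \<in> dualC sc \<Longrightarrow> rep f \<in> carr QM" unfolding QM_simps by blast

lemma QM_amod: "is_amod sc mul eps QM"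
  unfolding is_amod_def
proof (intro conjI ballI)
  show "zer QM \<in> carr QM" using carrI[OF A0] by (simp add: QM_simps)
next
  fix x y assume "x \<in> carr QM" "y \<in> carr QM"
  hence "(\<lambda>c. x c + y c) \<in> dualC sc" using carrD A_add by blast
  thus "pls QM x y \<in> carr QM" using carrI by (simp add: QM_simps)
next
  fix x y w assume x: "x \<in> carr QM" and y: "y \<in> carr QM" and w: "w \<in> carr QM"
  have xA: "x \<in> dualC sc" and yA: "y \<in> dualC sc" and wA: "w \<in> dualC sc" using carrD x y w by auto
  have "eqv (\<lambda>c. rep (\<lambda>c. x c + y c) c + w c) (\<lambda>c. (x c + y c) + w c)"
    using eqv_add[OF rep_eqv[OF A_add[OF xA yA]] eqv_refl] .
  moreover have "eqv (\<lambda>c. (x c + y c) + w c) (\<lambda>c. x c + rep (\<lambda>c. y c + w c) c)"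
    using eqv_add[OF eqv_refl eqv_sym[OF rep_eqv[OF A_add[OF yA wA]]], of x] by (simp add: add.assoc)
  ultimately show "pls QM (pls QM x y) w = pls QM x (pls QM y w)"
    unfolding QM_simps using eqv_trans rep_cong by blast
next
  fix x y assume "x \<in> carr QM" "y \<in> carr QM"
  show "pls QM x y = pls QM y x" unfolding QM_simps by (simp add: add.commute)
next
  fix x assume x: "x \<in> carr QM"
  have xA: "x \<in> dualC sc" and rx: "rep x = x" using carrD x by auto
  have "eqv (\<lambda>c. rep (\<lambda>c. 0) c + x c) (\<lambda>c. 0 + x c)"
    using eqv_add[OF rep_eqv[OF A0] eqv_refl] .
  hence "rep (\<lambda>c. rep (\<lambda>c. 0) c + x c) = rep x" using rep_cong by simp
  thus "pls QM (zer QM) x = x" unfolding QM_simps using rx by simp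
next
  fix x assume x: "x \<in> carr QM"
  have xA: "x \<in> dualC sc" using carrD x by auto
  have nA: "(\<lambda>c. - x c) \<in> dualC sc" using A_diff[OF A0 xA] by simp
  have "eqv (\<lambda>c. x c + rep (\<lambda>c. - x c) c) (\<lambda>c. x c + - x c)"
    using eqv_add[OF eqv_refl rep_eqv[OF nA]] .
  hence "rep (\<lambda>c. x c + rep (\<lambda>c. - x c) c) = rep (\<lambda>c. 0)" using rep_cong by simp
  moreover have "rep (\<lambda>c. - x c) \<in> carr QM" using carrI[OF nA] .
  ultimately show "\<exists>y\<in>carr QM. pls QM x y = zer QM" unfolding QM_simps by blast
next
  fix f x assume f: "f \<in> dualC sc" and x: "x \<in> carr QM"
  have "m f x \<in> dualC sc" using mA[OF f] carrD[OF x] by blast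
  thus "act QM f x \<in> carr QM" using carrI by (simp add: QM_simps)
next
  fix f x y assume f: "f \<in> dualC sc" and x: "x \<in> carr QM" and y: "y \<in> carr QM"
  have xA: "x \<in> dualC sc" and yA: "y \<in> dualC sc" using carrD x y by auto
  have "eqv (m f (rep (\<lambda>c. x c + y c))) (m f (\<lambda>c. x c + y c))"
    using eqv_m[OF f rep_eqv[OF A_add[OF xA yA]]] .
  moreover have "m f (\<lambda>c. x c + y c) = (\<lambda>c. m f x c + m f y c)" by (rule madd_r)
  moreover have "eqv (\<lambda>c. m f x c + m f y c) (\<lambda>c. rep (m f x) c + rep (m f y) c)"
    using eqv_add[OF eqv_sym[OF rep_eqv[OF mA[OF f xA]]] eqv_sym[OF rep_eqv[OF mA[OF f yA]]]] .
  ultimately show "act QM f (pls QM x y) = pls QM (act QM f x) (act QM f y)"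
    unfolding QM_simps using eqv_trans rep_cong by metis
next
  fix f g x assume f: "f \<in> dualC sc" and g: "g \<in> dualC sc" and x: "x \<in> carr QM"
  have xA: "x \<in> dualC sc" using carrD x by auto
  have "eqv (\<lambda>c. m f x c + m g x c) (\<lambda>c. rep (m f x) c + rep (m g x) c)"
    using eqv_add[OF eqv_sym[OF rep_eqv[OF mA[OF f xA]]] eqv_sym[OF rep_eqv[OF mA[OF g xA]]]] .
  thus "act QM (\<lambda>c. f c + g c) x = pls QM (act QM f x) (act QM g x)"
    unfolding QM_simps madd_l using rep_cong by blast
next
  fix f g x assume f: "f \<in> dualC sc" and g: "g \<in> dualC sc" and x: "x \<in> carr QM"
  have xA: "x \<in> dualC sc" using carrD x by auto
  have "eqv (m f (m g x)) (m f (rep (m g x)))"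
    using eqv_m[OF f eqv_sym[OF rep_eqv[OF mA[OF g xA]]]] .
  thus "act QM (mul f g) x = act QM f (act QM g x)"
    unfolding QM_simps massoc[OF f g xA] using rep_cong by blast
next
  fix x assume x: "x \<in> carr QM"
  show "act QM eps x = x" unfolding QM_simps using meps_l carrD[OF x] by simp
qed

lemma epsnot0: "rep eps \<noteq> rep (\<lambda>c. 0)"
proof
  assume "rep eps = rep (\<lambda>c. 0)"
  hence "eqv eps (\<lambda>c. 0)" using rep_eq_iff[OF Aeps A0] by blast
  thus False using eqv_L Leps by blast
qed

lemma QM_simple: "simple_on sc QM"
  unfolding simple_on_def
proof (intro conjI allI impI)
  show "carr QM \<noteq> {zer QM}" using epsnot0 carrI[OF Aeps] carrI[OF A0] unfolding QM_simps by blast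
next
  fix N assume N: "submod sc QM N"
  have Ns: "N \<subseteq> carr QM" "zer QM \<in> N" "\<forall>x\<in>N. \<forall>y\<in>N. pls QM x y \<in> N" "\<forall>f\<in>dualC sc. \<forall>x\<in>N. act QM f x \<in> N"
    using N unfolding submod_def by auto
  define L' where "L' = {f \<in> dualC sc. rep f \<in> N}"
  have L'A: "L' \<subseteq> dualC sc" unfolding L'_def by blast
  have L'0: "(\<lambda>c. 0) \<in> L'" unfolding L'_def using A0 Ns(2) QM_simps by simp
  have L'add: "\<forall>f\<in>L'. \<forall>g\<in>L'. (\<lambda>c. f c + g c) \<in> L'"
  proof (intro ballI)
    fix f g assume "f \<in> L'" "g \<in> L'"
    hence fg: "f \<in> dualC sc" "g \<in> dualC sc" "rep f \<in> N" "rep g \<in> N" unfolding L'_def by auto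
    have "eqv (\<lambda>c. f c + g c) (\<lambda>c. rep f c + rep g c)"
      using eqv_add[OF eqv_sym[OF rep_eqv[OF fg(1)]] eqv_sym[OF rep_eqv[OF fg(2)]]] .
    hence "rep (\<lambda>c. f c + g c) = pls QM (rep f) (rep g)" unfolding QM_simps using rep_cong by blast
    thus "(\<lambda>c. f c + g c) \<in> L'" unfolding L'_def using Ns(3) fg A_add by simp
  qed
  have L'm: "\<forall>g\<in>dualC sc. \<forall>f\<in>L'. m g f \<in> L'"
  proof (intro ballI)
    fix g f assume g: "g \<in> dualC sc" and "f \<in> L'"
    hence f: "f \<in> dualC sc" "rep f \<in> N" unfolding L'_def by auto
    have "eqv (m g f) (m g (rep f))" using eqv_m[OF g eqv_sym[OF rep_eqv[OF f(1)]]] .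
    hence "rep (m g f) = act QM g (rep f)" unfolding QM_simps using rep_cong by blast
    thus "m g f \<in> L'" unfolding L'_def using Ns(4) g f mA by simp
  qed
  have LL': "L \<subseteq> L'"
  proof
    fix f assume f: "f \<in> L"
    hence fA: "f \<in> dualC sc" using LA by blast
    have "eqv f (\<lambda>c. 0)" unfolding eqv_def using f by simp
    hence "rep f = zer QM" unfolding QM_simps using rep_cong by blast
    thus "f \<in> L'" unfolding L'_def using fA Ns(2) by simp
  qed
  show "N = {zer QM} \<or> N = carr QM"
  proof (cases "eps \<in> L'")
    case False
    hence "L' = L" using Lmax[OF L'A L'0 L'add L'm LL'] by blast
    have "N \<subseteq> {zer QM}"
    proof
      fix n assume n: "n \<in> N"
      then obtain f where f: "f \<in> dualC sc" "n = rep f" using Ns(1) QM_simps by auto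
      hence "f \<in> L'" unfolding L'_def using n rep_rep by simp
      hence "f \<in> L" using \<open>L' = L\<close> by simp
      hence "eqv f (\<lambda>c. 0)" unfolding eqv_def by simp
      thus "n \<in> {zer QM}" using f rep_cong QM_simps by simp
    qed
    thus ?thesis using Ns(2) by blast
  next
    case True
    hence e: "rep eps \<in> N" unfolding L'_def by simp
    have "carr QM \<subseteq> N"
    proof
      fix x assume "x \<in> carr QM"
      then obtain g where g: "g \<in> dualC sc" "x = rep g" unfolding QM_simps by blast
      have "eqv (m g (rep eps)) (m g eps)" using eqv_m[OF g(1) rep_eqv[OF Aeps]] .
      hence "act QM g (rep eps) = rep g" unfolding QM_simps using rep_cong meps_r[OF g(1)] by simp
      thus "x \<in> N" using Ns(4) g e by metis
    qed
    thus ?thesis using Ns(1) by blast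
  qed
qed

lemma msc_QM0: "msc eps QM 0 u = zer QM"
  unfolding msc_def QM_simps using m0_l by simp

lemma msum_QM0: "\<forall>x\<in>set xs. x = zer QM \<Longrightarrow> msum QM xs = zer QM"
proof (induct xs)
  case Nil thus ?case by (simp add: msum_def)
next
  case (Cons a xs)
  hence "a = zer QM" "msum QM xs = zer QM" by auto
  moreover have "rep (\<lambda>c. rep (\<lambda>c. 0) c + rep (\<lambda>c. 0) c) = rep (\<lambda>c. 0)"
    using rep_cong[OF eqv_add[OF rep_eqv[OF A0] rep_eqv[OF A0]]] by simp
  ultimately show ?case by (simp add: msum_def QM_simps)
qed

lemma ann_false:
  assumes dens: "\<exists>j\<in>L. \<forall>c\<in>set cs. j c = eps c"
  and ann: "\<forall>f\<in>dualC sc. (\<forall>c\<in>set cs. f c = 0) \<longrightarrow> act QM f (rep eps) = zer QM"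
  shows False
proof -
  obtain j where j: "j \<in> L" "\<forall>c\<in>set cs. j c = eps c" using dens by blast
  define f where "f = (\<lambda>c. eps c - j c)"
  have fA: "f \<in> dualC sc" unfolding f_def using A_diff[OF Aeps] j LA by blast
  have "act QM f (rep eps) = zer QM" using ann fA j by (simp add: f_def)
  moreover have "act QM f (rep eps) = rep f"
    unfolding QM_simps using rep_cong[OF eqv_m[OF fA rep_eqv[OF Aeps]]] meps_r[OF fA] by simp
  ultimately have "rep f = rep (\<lambda>c. 0)" by (simp add: QM_simps)
  hence "f \<in> L" using rep_eq_iff[OF fA A0] eqv_L by blast
  hence "(\<lambda>c. f c + j c) \<in> L" using Ladd j by blast
  thus False using Leps by (simp add: f_def)
qed

lemma not_rat_left: assumes dens: "\<And>cs. \<exists>j\<in>L. \<forall>c\<in>set cs. j c = eps c"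
  shows "\<not> rational_left sc delta eps QM"
proof
  assume "rational_left sc delta eps QM"
  then obtain rho where rho: "\<forall>f\<in>dualC sc. \<forall>x\<in>carr QM. act QM f x = msum QM (map (\<lambda>(u,c). msc eps QM (f c) u) (rho x))"
    unfolding rational_left_def by blast
  let ?cs = "map snd (rho (rep eps))"
  have "\<forall>f\<in>dualC sc. (\<forall>c\<in>set ?cs. f c = 0) \<longrightarrow> act QM f (rep eps) = zer QM"
  proof (intro ballI impI)
    fix f assume f: "f \<in> dualC sc" and z: "\<forall>c\<in>set ?cs. f c = 0"
    have "act QM f (rep eps) = msum QM (map (\<lambda>(u,c). msc eps QM (f c) u) (rho (rep eps)))"
      using rho f carrI[OF Aeps] by blast
    also have "\<dots> = zer QM"
    proof (rule msum_QM0, intro ballI)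
      fix x assume "x \<in> set (map (\<lambda>(u,c). msc eps QM (f c) u) (rho (rep eps)))"
      then obtain u c where "(u,c) \<in> set (rho (rep eps))" "x = msc eps QM (f c) u" by auto
      moreover hence "f c = 0" using z by force
      ultimately show "x = zer QM" using msc_QM0 by simp
    qed
    finally show "act QM f (rep eps) = zer QM" .
  qed
  thus False using ann_false dens by blast
qed

lemma not_rat_right: assumes dens: "\<And>cs. \<exists>j\<in>L. \<forall>c\<in>set cs. j c = eps c"
  shows "\<not> rational_right sc delta eps QM"
proof
  assume "rational_right sc delta eps QM"
  then obtain lam where lam: "\<forall>f\<in>dualC sc. \<forall>x\<in>carr QM. act QM f x = msum QM (map (\<lambda>(c,u). msc eps QM (f c) u) (lam x))"
    unfolding rational_right_def by blast
  let ?cs = "map fst (lam (rep eps))"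
  have "\<forall>f\<in>dualC sc. (\<forall>c\<in>set ?cs. f c = 0) \<longrightarrow> act QM f (rep eps) = zer QM"
  proof (intro ballI impI)
    fix f assume f: "f \<in> dualC sc" and z: "\<forall>c\<in>set ?cs. f c = 0"
    have "act QM f (rep eps) = msum QM (map (\<lambda>(c,u). msc eps QM (f c) u) (lam (rep eps)))"
      using lam f carrI[OF Aeps] by blast
    also have "\<dots> = zer QM"
    proof (rule msum_QM0, intro ballI)
      fix x assume "x \<in> set (map (\<lambda>(c,u). msc eps QM (f c) u) (lam (rep eps)))"
      then obtain u c where "(c,u) \<in> set (lam (rep eps))" "x = msc eps QM (f c) u" by auto
      moreover hence "f c = 0" using z by force
      ultimately show "x = zer QM" using msc_QM0 by simp
    qed
    finally show "act QM f (rep eps) = zer QM" .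
  qed
  thus False using ann_false dens by blast
qed

end

context dens begin

definition lideal where "lideal m L \<longleftrightarrow> L \<subseteq> dualC sc \<and> (\<lambda>c. 0) \<in> L \<and>
   (\<forall>f\<in>L. \<forall>g\<in>L. (\<lambda>c. f c + g c) \<in> L) \<and> (\<forall>g\<in>dualC sc. \<forall>f\<in>L. m g f \<in> L)"

lemma lidealD: assumes "lideal m L" shows "L \<subseteq> dualC sc" "(\<lambda>c. 0) \<in> L"
  "\<And>f g. f \<in> L \<Longrightarrow> g \<in> L \<Longrightarrow> (\<lambda>c. f c + g c) \<in> L" "\<And>f g. g \<in> dualC sc \<Longrightarrow> f \<in> L \<Longrightarrow> m g f \<in> L"
  using assms unfolding lideal_def by auto

lemma exists_max:
  assumes Jm: "\<forall>g\<in>dualC sc. \<forall>f\<in>J. m g f \<in> J"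
  shows "\<exists>L. lideal m L \<and> J \<subseteq> L \<and> eps \<notin> L \<and> (\<forall>L'. lideal m L' \<and> L \<subseteq> L' \<and> eps \<notin> L' \<longrightarrow> L' = L)"
proof -
  define FA where "FA = {L. lideal m L \<and> J \<subseteq> L \<and> eps \<notin> L}"
  have "lideal m J" unfolding lideal_def using J_A J_0 J_add Jm by blast
  hence JFA: "J \<in> FA" unfolding FA_def using eps_notin_J by blast
  have "\<exists>M\<in>FA. \<forall>X\<in>FA. M \<subseteq> X \<longrightarrow> X = M"
  proof (rule subset_Zorn_nonempty)
    show "FA \<noteq> {}" using JFA by blast
  next
    fix C assume C: "C \<noteq> {}" "subset.chain FA C"
    have CF: "C \<subseteq> FA" and ch: "\<forall>X\<in>C. \<forall>Y\<in>C. X \<subseteq> Y \<or> Y \<subseteq> X" using C(2) by (auto simp: subset_chain_def)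
    obtain L0 where L0: "L0 \<in> C" using C(1) by blast
    have mem: "X \<in> C \<Longrightarrow> lideal m X \<and> J \<subseteq> X \<and> eps \<notin> X" for X using CF FA_def by blast
    have "lideal m (\<Union>C)" unfolding lideal_def
    proof (intro conjI ballI)
      show "\<Union>C \<subseteq> dualC sc"
      proof
        fix f assume "f \<in> \<Union>C"
        then obtain X where "X \<in> C" "f \<in> X" by blast
        thus "f \<in> dualC sc" using lidealD(1)[of m X] mem by blast
      qed
      show "(\<lambda>c. 0) \<in> \<Union>C" using lidealD(2)[of m L0] mem[OF L0] L0 by blast
    next
      fix f g assume "f \<in> \<Union>C" "g \<in> \<Union>C"
      then obtain X Y where XY: "X \<in> C" "Y \<in> C" "f \<in> X" "g \<in> Y" by blast
      show "(\<lambda>c. f c + g c) \<in> \<Union>C"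
      proof (cases "X \<subseteq> Y")
        case True
        hence "f \<in> Y" using XY by blast
        hence "(\<lambda>c. f c + g c) \<in> Y" using lidealD(3)[of m Y] mem[OF XY(2)] XY by blast
        thus ?thesis using XY by blast
      next
        case False
        hence "Y \<subseteq> X" using ch XY by blast
        hence "g \<in> X" using XY by blast
        hence "(\<lambda>c. f c + g c) \<in> X" using lidealD(3)[of m X] mem[OF XY(1)] XY by blast
        thus ?thesis using XY by blast
      qed
    next
      fix g f assume g: "g \<in> dualC sc" and "f \<in> \<Union>C"
      then obtain X where X: "X \<in> C" "f \<in> X" by blast
      hence "m g f \<in> X" using lidealD(4)[of m X] mem[OF X(1)] g by blast
      thus "m g f \<in> \<Union>C" using X by blast
    qed
    moreover have "J \<subseteq> \<Union>C" using mem[OF L0] L0 by blast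
    moreover have "eps \<notin> \<Union>C"
    proof
      assume "eps \<in> \<Union>C"
      then obtain X where "X \<in> C" "eps \<in> X" by blast
      thus False using mem by blast
    qed
    ultimately show "\<Union>C \<in> FA" unfolding FA_def by blast
  qed
  then obtain L where L: "L \<in> FA" "\<forall>X\<in>FA. L \<subseteq> X \<longrightarrow> X = L" by blast
  have "\<forall>L'. lideal m L' \<and> L \<subseteq> L' \<and> eps \<notin> L' \<longrightarrow> L' = L"
  proof (intro allI impI)
    fix L' assume a: "lideal m L' \<and> L \<subseteq> L' \<and> eps \<notin> L'"
    hence "L' \<in> FA" using L(1) unfolding FA_def by blast
    thus "L' = L" using L(2) a by blast
  qed
  thus ?thesis using L(1) unfolding FA_def by blast
qed

lemma neg_eps_fun: "(\<lambda>c. - eps c) = (\<lambda>c. (-1) * eps c)" by simp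

lemma main_left: "\<exists>M :: ('c \<Rightarrow> 'k, 'c \<Rightarrow> 'k) amod. simple_left sc delta eps M \<and> \<not> rational_left sc delta eps M"
proof -
  have "\<forall>g\<in>dualC sc. \<forall>f\<in>J. conv delta g f \<in> J" using J_left by blast
  from exists_max[OF this] obtain L where L: "lideal (conv delta) L" "J \<subseteq> L" "eps \<notin> L"
    "\<forall>L'. lideal (conv delta) L' \<and> L \<subseteq> L' \<and> eps \<notin> L' \<longrightarrow> L' = L" by blast
  interpret Q: quot sc delta eps "conv delta" "conv delta" L
  proof (unfold_locales)
    show "\<And>f x. f \<in> dualC sc \<Longrightarrow> x \<in> dualC sc \<Longrightarrow> conv delta f x \<in> dualC sc" by (rule conv_A)
    show "\<And>f g x. conv delta (\<lambda>c. f c + g c) x = (\<lambda>c. conv delta f x c + conv delta g x c)" by (rule conv_add_left)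
    show "\<And>f x y. conv delta f (\<lambda>c. x c + y c) = (\<lambda>c. conv delta f x c + conv delta f y c)" by (rule conv_add_right)
    show "\<And>f x y. conv delta f (\<lambda>c. x c - y c) = (\<lambda>c. conv delta f x c - conv delta f y c)" by (rule conv_diff_right)
    show "\<And>x. conv delta (\<lambda>c. 0) x = (\<lambda>c. 0)" by (rule conv_zero_left)
    show "\<And>x. x \<in> dualC sc \<Longrightarrow> conv delta (\<lambda>c. - eps c) x = (\<lambda>c. - x c)"
      by (simp only: neg_eps_fun conv_epsscal_left A_D) simp
    show "\<And>x. x \<in> dualC sc \<Longrightarrow> conv delta eps x = x" by (simp add: conv_eps_left A_D)
    show "\<And>f. f \<in> dualC sc \<Longrightarrow> conv delta f eps = f" by (simp add: conv_eps_right A_D)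
    show "\<And>f g x. f \<in> dualC sc \<Longrightarrow> g \<in> dualC sc \<Longrightarrow> x \<in> dualC sc \<Longrightarrow>
        conv delta (conv delta f g) x = conv delta f (conv delta g x)" by (metis conv_assoc A_D)
    show "L \<subseteq> dualC sc" by (rule lidealD(1)[OF L(1)])
    show "(\<lambda>c. 0) \<in> L" by (rule lidealD(2)[OF L(1)])
    show "\<And>f g. f \<in> L \<Longrightarrow> g \<in> L \<Longrightarrow> (\<lambda>c. f c + g c) \<in> L" by (rule lidealD(3)[OF L(1)])
    show "\<And>f g. g \<in> dualC sc \<Longrightarrow> f \<in> L \<Longrightarrow> conv delta g f \<in> L" using lidealD(4)[OF L(1)] by blast
    show "eps \<notin> L" by (rule L(3))
    show "\<And>L'. L' \<subseteq> dualC sc \<Longrightarrow> (\<lambda>c. 0) \<in> L' \<Longrightarrow> \<forall>f\<in>L'. \<forall>g\<in>L'. (\<lambda>c. f c + g c) \<in> L' \<Longrightarrow>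
       \<forall>g\<in>dualC sc. \<forall>f\<in>L'. conv delta g f \<in> L' \<Longrightarrow> L \<subseteq> L' \<Longrightarrow> eps \<notin> L' \<Longrightarrow> L' = L"
    proof -
      fix L' assume a: "L' \<subseteq> dualC sc" "(\<lambda>c. 0) \<in> L'" "\<forall>f\<in>L'. \<forall>g\<in>L'. (\<lambda>c. f c + g c) \<in> L'" "\<forall>g\<in>dualC sc. \<forall>f\<in>L'. conv delta g f \<in> L'" "L \<subseteq> L'" "eps \<notin> L'"
      have "lideal (conv delta) L'" unfolding lideal_def using a by blast
      thus "L' = L" using L(4) a(5,6) by blast
    qed
  qed
  have "simple_left sc delta eps Q.QM"
    unfolding simple_left_def left_amod_def using Q.QM_amod Q.QM_simple by blast
  moreover have "\<not> rational_left sc delta eps Q.QM"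
    by (rule Q.not_rat_left) (use density L(2) in blast)
  ultimately show ?thesis by blast
qed

lemma main_right: "\<exists>M :: ('c \<Rightarrow> 'k, 'c \<Rightarrow> 'k) amod. simple_right sc delta eps M \<and> \<not> rational_right sc delta eps M"
proof -
  have "\<forall>g\<in>dualC sc. \<forall>f\<in>J. conv delta f g \<in> J" using J_right by blast
  from exists_max[of "\<lambda>g f. conv delta f g", OF this] obtain L where L: "lideal (\<lambda>g f. conv delta f g) L" "J \<subseteq> L" "eps \<notin> L"
    "\<forall>L'. lideal (\<lambda>g f. conv delta f g) L' \<and> L \<subseteq> L' \<and> eps \<notin> L' \<longrightarrow> L' = L" by blast
  interpret Q: quot sc delta eps "\<lambda>g f. conv delta f g" "\<lambda>f g. conv delta g f" L
  proof (unfold_locales)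
    show "\<And>f x. f \<in> dualC sc \<Longrightarrow> x \<in> dualC sc \<Longrightarrow> conv delta x f \<in> dualC sc" by (rule conv_A)
    show "\<And>f g x. conv delta x (\<lambda>c. f c + g c) = (\<lambda>c. conv delta x f c + conv delta x g c)" by (rule conv_add_right)
    show "\<And>f x y. conv delta (\<lambda>c. x c + y c) f = (\<lambda>c. conv delta x f c + conv delta y f c)" by (rule conv_add_left)
    show "\<And>f x y. conv delta (\<lambda>c. x c - y c) f = (\<lambda>c. conv delta x f c - conv delta y f c)" by (rule conv_diff_left)
    show "\<And>x. conv delta x (\<lambda>c. 0) = (\<lambda>c. 0)" by (rule conv_zero_right)
    show "\<And>x. x \<in> dualC sc \<Longrightarrow> conv delta x (\<lambda>c. - eps c) = (\<lambda>c. - x c)"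
      by (simp only: neg_eps_fun conv_epsscal_right A_D) simp
    show "\<And>x. x \<in> dualC sc \<Longrightarrow> conv delta x eps = x" by (simp add: conv_eps_right A_D)
    show "\<And>f. f \<in> dualC sc \<Longrightarrow> conv delta eps f = f" by (simp add: conv_eps_left A_D)
    show "\<And>f g x. f \<in> dualC sc \<Longrightarrow> g \<in> dualC sc \<Longrightarrow> x \<in> dualC sc \<Longrightarrow>
        conv delta x (conv delta g f) = conv delta (conv delta x g) f" by (metis conv_assoc A_D)
    show "L \<subseteq> dualC sc" by (rule lidealD(1)[OF L(1)])
    show "(\<lambda>c. 0) \<in> L" by (rule lidealD(2)[OF L(1)])
    show "\<And>f g. f \<in> L \<Longrightarrow> g \<in> L \<Longrightarrow> (\<lambda>c. f c + g c) \<in> L" by (rule lidealD(3)[OF L(1)])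
    show "\<And>f g. g \<in> dualC sc \<Longrightarrow> f \<in> L \<Longrightarrow> conv delta f g \<in> L" using lidealD(4)[OF L(1)] by blast
    show "eps \<notin> L" by (rule L(3))
    show "\<And>L'. L' \<subseteq> dualC sc \<Longrightarrow> (\<lambda>c. 0) \<in> L' \<Longrightarrow> \<forall>f\<in>L'. \<forall>g\<in>L'. (\<lambda>c. f c + g c) \<in> L' \<Longrightarrow>
       \<forall>g\<in>dualC sc. \<forall>f\<in>L'. conv delta f g \<in> L' \<Longrightarrow> L \<subseteq> L' \<Longrightarrow> eps \<notin> L' \<Longrightarrow> L' = L"
    proof -
      fix L' assume a: "L' \<subseteq> dualC sc" "(\<lambda>c. 0) \<in> L'" "\<forall>f\<in>L'. \<forall>g\<in>L'. (\<lambda>c. f c + g c) \<in> L'" "\<forall>g\<in>dualC sc. \<forall>f\<in>L'. conv delta f g \<in> L'" "L \<subseteq> L'" "eps \<notin> L'"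
      have "lideal (\<lambda>g f. conv delta f g) L'" unfolding lideal_def using a by blast
      thus "L' = L" using L(4) a(5,6) by blast
    qed
  qed
  have "simple_right sc delta eps Q.QM"
    unfolding simple_right_def right_amod_def using Q.QM_amod Q.QM_simple by blast
  moreover have "\<not> rational_right sc delta eps Q.QM"
    by (rule Q.not_rat_right) (use density L(2) in blast)
  ultimately show ?thesis by blast
qed

end

theorem lemma6p1:
  fixes sc :: "'k::field \<Rightarrow> 'c::ab_group_add \<Rightarrow> 'c"
    and delta :: "'c \<Rightarrow> ('c \<times> 'c) list"
    and eps :: "'c \<Rightarrow> 'k"
  assumes "coalgebra sc delta eps"
    and "\<exists>S :: ('c \<Rightarrow> 'k, 'm) amod set. infinite S \<and>
           (\<forall>M\<in>S. simple_right sc delta eps M \<and> rational_right sc delta eps M) \<and>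
           (\<forall>M\<in>S. \<forall>N\<in>S. M \<noteq> N \<longrightarrow> \<not> mod_iso sc M N)"
  shows "(\<exists>M :: ('c \<Rightarrow> 'k, 'c \<Rightarrow> 'k) amod. simple_left sc delta eps M \<and> \<not> rational_left sc delta eps M)
       \<and> (\<exists>M :: ('c \<Rightarrow> 'k, 'c \<Rightarrow> 'k) amod. simple_right sc delta eps M \<and> \<not> rational_right sc delta eps M)"
proof -
  obtain S :: "('c \<Rightarrow> 'k, 'm) amod set" where S: "infinite S"
    "\<forall>M\<in>S. simple_right sc delta eps M \<and> rational_right sc delta eps M"
    "\<forall>M\<in>S. \<forall>N\<in>S. M \<noteq> N \<longrightarrow> \<not> mod_iso sc M N" using assms(2) by blast
  interpret D: dens sc delta eps S
    by unfold_locales (use assms(1) S in auto)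
  show ?thesis using D.main_left D.main_right by blast
qed

end
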